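(* Let $q\ge3$, $G\in\mathbb G^q$, $S=\Psi(G)$, and $c\in\{1,\dots,q\}$. If every connected component of $S_{\hat c}$ is a tree, then every connected component of the graph obtained from $G_{\hat 0}$ by deleting all color-$c$ edges (the $c$-residues of $G_{\hat 0}$) is a melonic graph with color set $\{1,\dots,q\}\setminus\{c\}$.
   Context: Fix an integer $q\ge 2$. A $(q+1)$-edge-colored graph (colored graph) is a finite connected graph, multiple edges allowed and no loops, whose edges carry colors in $\{0,1,\dots,q\}$ such that every vertex is incident to exactly one edge of each color. It is rooted if one color-0 edge is distinguished and oriented; it is bipartite if its vertices can be colored black and white so that every edge joins a black and a white vertex, with the convention that the origin of the root edge is black. $\mathbb G^q$ denotes the set of rooted bipartite colored graphs. $G_{\hat 0}$ denotes the graph obtained from $G$ by deleting all color-0 edges. Constellations: given $G\in\mathbb G^q$, its constellation $S=\Psi(G)$ is obtained as follows: orient every edge from its black to its white endpoint; contract every color-0 edge into a single vertex, called a white vertex of $S$. For each $i\in\{1,\dots,q\}$ the color-$i$ edges now form directed cycles; for each such cycle, passing through white vertices $w_1,\dots,w_p$ in this cyclic order, add a new vertex of color $i$ joined by one color-$i$ edge to each $w_k$, equip the new vertex with the cyclic order $(w_1,\dots,w_p)$ of its incident edges, and delete the original color-$i$ edges of the cycle. For $c\in\{1,\dots,q\}$, $S_{\hat c}$ is the graph obtained from $S$ by deleting all vertices of color $c$ and all edges of color $c$. Melonic graphs: for a color set $A$ with $|A|=k\ge2$, a melonic graph with colors $A$ is a graph obtained from the graph with two vertices joined by $k$ edges of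 all colors of $A$ by finitely many insertions, where an insertion picks an edge $\{u,v\}$ of some color $a\in A$, deletes it, adds two new vertices $x,y$ joined by $k-1$ edges of the colors $A\setminus\{a\}$, and adds color-$a$ edges $\{u,x\}$ and $\{y,v\}$. *)

theory Defs
  imports Main
begin

definition adj :: "'e set \<Rightarrow> ('e \<Rightarrow> 'v set) \<Rightarrow> ('v \<times> 'v) set" where
  "adj E ends = {(u, v). \<exists>e\<in>E. u \<in> ends e \<and> v \<in> ends e}"

definition connected_mg :: "'v set \<Rightarrow> 'e set \<Rightarrow> ('e \<Rightarrow> 'v set) \<Rightarrow> bool" where
  "connected_mg V E ends \<longleftrightarrow> V \<noteq> {} \<and> (\<forall>u\<in>V. \<forall>v\<in>V. (u, v) \<in> (adj E ends)\<^sup>*)"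

definition has_cycle :: "'v set \<Rightarrow> 'e set \<Rightarrow> ('e \<Rightarrow> 'v set) \<Rightarrow> bool" where
  "has_cycle V E ends \<longleftrightarrow> (\<exists>vs es. length vs = length es \<and> length es \<ge> 1 \<and>
      distinct vs \<and> distinct es \<and> set vs \<subseteq> V \<and> set es \<subseteq> E \<and>
      (\<forall>k < length es. ends (es ! k) = {vs ! k, vs ! ((k + 1) mod length es)}))"

definition is_tree :: "'v set \<Rightarrow> 'e set \<Rightarrow> ('e \<Rightarrow> 'v set) \<Rightarrow> bool" where
  "is_tree V E ends \<longleftrightarrow> connected_mg V E ends \<and> \<not> has_cycle V E ends"

definition component :: "'v set \<Rightarrow> 'e set \<Rightarrow> ('e \<Rightarrow> 'v set) \<Rightarrow> 'v \<Rightarrow> 'v set" where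
  "component V E ends v = {u \<in> V. (v, u) \<in> (adj {e\<in>E. ends e \<subseteq> V} ends)\<^sup>*}"

definition edges_within :: "'e set \<Rightarrow> ('e \<Rightarrow> 'v set) \<Rightarrow> 'v set \<Rightarrow> 'e set" where
  "edges_within E ends C = {e \<in> E. ends e \<subseteq> C}"

definition all_components_trees :: "'v set \<Rightarrow> 'e set \<Rightarrow> ('e \<Rightarrow> 'v set) \<Rightarrow> bool" where
  "all_components_trees V E ends \<longleftrightarrow>
     (\<forall>v\<in>V. is_tree (component V E ends v) (edges_within E ends (component V E ends v)) ends)"

definition colored_graph :: "nat \<Rightarrow> 'v set \<Rightarrow> 'e set \<Rightarrow> ('e \<Rightarrow> 'v set) \<Rightarrow> ('e \<Rightarrow> nat) \<Rightarrow> bool" where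
  "colored_graph q V E ends col \<longleftrightarrow>
     finite V \<and> finite E \<and>
     (\<forall>e\<in>E. \<exists>u v. u \<in> V \<and> v \<in> V \<and> u \<noteq> v \<and> ends e = {u, v}) \<and>
     (\<forall>e\<in>E. col e \<le> q) \<and>
     (\<forall>v\<in>V. \<forall>i\<le>q. \<exists>!e. e \<in> E \<and> col e = i \<and> v \<in> ends e) \<and>
     connected_mg V E ends"

text \<open>Rooted (root edge r of colour 0, oriented with origin ro) and bipartite with
  black/white colouring blk (True = black), origin of the root black.\<close>
definition rooted_bipartite_colored_graph ::
  "nat \<Rightarrow> 'v set \<Rightarrow> 'e set \<Rightarrow> ('e \<Rightarrow> 'v set) \<Rightarrow> ('e \<Rightarrow> nat) \<Rightarrow> 'e \<Rightarrow> 'v \<Rightarrow> ('v \<Rightarrow> bool) \<Rightarrow> bool" where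
  "rooted_bipartite_colored_graph q V E ends col r ro blk \<longleftrightarrow>
     colored_graph q V E ends col \<and> r \<in> E \<and> col r = 0 \<and> ro \<in> ends r \<and>
     (\<forall>e\<in>E. \<exists>b w. ends e = {b, w} \<and> blk b \<and> \<not> blk w) \<and> blk ro"

definition edge_at :: "'e set \<Rightarrow> ('e \<Rightarrow> 'v set) \<Rightarrow> ('e \<Rightarrow> nat) \<Rightarrow> 'v \<Rightarrow> nat \<Rightarrow> 'e" where
  "edge_at E ends col v i = (THE e. e \<in> E \<and> col e = i \<and> v \<in> ends e)"

definition black_end :: "('e \<Rightarrow> 'v set) \<Rightarrow> ('v \<Rightarrow> bool) \<Rightarrow> 'e \<Rightarrow> 'v" where
  "black_end ends blk e = (THE v. v \<in> ends e \<and> blk v)"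

definition white_end :: "('e \<Rightarrow> 'v set) \<Rightarrow> ('v \<Rightarrow> bool) \<Rightarrow> 'e \<Rightarrow> 'v" where
  "white_end ends blk e = (THE v. v \<in> ends e \<and> \<not> blk v)"

text \<open>After contracting colour-0 edges, a white vertex of S is a colour-0 edge e0 of G.
  The (black-to-white oriented) colour-i edge leaving the contracted vertex e0 ends in the
  contracted vertex psi_succ i e0. The directed colour-i cycles are the orbits of this map.\<close>
definition psi_succ :: "'e set \<Rightarrow> ('e \<Rightarrow> 'v set) \<Rightarrow> ('e \<Rightarrow> nat) \<Rightarrow> ('v \<Rightarrow> bool) \<Rightarrow> nat \<Rightarrow> 'e \<Rightarrow> 'e" where
  "psi_succ E ends col blk i e0 =
     edge_at E ends col (white_end ends blk (edge_at E ends col (black_end ends blk e0) i)) 0"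

definition psi_cycle :: "'e set \<Rightarrow> ('e \<Rightarrow> 'v set) \<Rightarrow> ('e \<Rightarrow> nat) \<Rightarrow> ('v \<Rightarrow> bool) \<Rightarrow> nat \<Rightarrow> 'e \<Rightarrow> 'e set" where
  "psi_cycle E ends col blk i e0 = {(psi_succ E ends col blk i ^^ n) e0 | n. True}"

text \<open>Vertices of S: Inl e0 (white vertices = colour-0 edges of G) and Inr (i, C)
  (the colour-i vertex created for the colour-i cycle C). Edges of S: (e0, i), the
  colour-i edge joining the white vertex e0 to the vertex of its colour-i cycle.\<close>
definition psiV :: "nat \<Rightarrow> 'e set \<Rightarrow> ('e \<Rightarrow> 'v set) \<Rightarrow> ('e \<Rightarrow> nat) \<Rightarrow> ('v \<Rightarrow> bool) \<Rightarrow> ('e + nat \<times> 'e set) set" where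
  "psiV q E ends col blk =
     Inl ` {e \<in> E. col e = 0} \<union>
     {Inr (i, psi_cycle E ends col blk i e0) | i e0. i \<in> {1..q} \<and> e0 \<in> E \<and> col e0 = 0}"

definition psiE :: "nat \<Rightarrow> 'e set \<Rightarrow> ('e \<Rightarrow> nat) \<Rightarrow> ('e \<times> nat) set" where
  "psiE q E col = {(e0, i). e0 \<in> E \<and> col e0 = 0 \<and> i \<in> {1..q}}"

definition psi_ends :: "'e set \<Rightarrow> ('e \<Rightarrow> 'v set) \<Rightarrow> ('e \<Rightarrow> nat) \<Rightarrow> ('v \<Rightarrow> bool) \<Rightarrow> 'e \<times> nat \<Rightarrow> ('e + nat \<times> 'e set) set" where
  "psi_ends E ends col blk = (\<lambda>(e0, i). {Inl e0, Inr (i, psi_cycle E ends col blk i e0)})"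

fun psi_vcol :: "'e + nat \<times> 'e set \<Rightarrow> nat" where
  "psi_vcol (Inl _) = 0"
| "psi_vcol (Inr (i, _)) = i"

fun psi_ecol :: "'e \<times> nat \<Rightarrow> nat" where
  "psi_ecol (_, i) = i"

definition psiV_hat :: "nat \<Rightarrow> nat \<Rightarrow> 'e set \<Rightarrow> ('e \<Rightarrow> 'v set) \<Rightarrow> ('e \<Rightarrow> nat) \<Rightarrow> ('v \<Rightarrow> bool) \<Rightarrow> ('e + nat \<times> 'e set) set" where
  "psiV_hat q c E ends col blk = {x \<in> psiV q E ends col blk. psi_vcol x \<noteq> c}"

definition psiE_hat :: "nat \<Rightarrow> nat \<Rightarrow> 'e set \<Rightarrow> ('e \<Rightarrow> nat) \<Rightarrow> ('e \<times> nat) set" where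
  "psiE_hat q c E col = {x \<in> psiE q E col. psi_ecol x \<noteq> c}"

text \<open>Melonic graphs with colour set A, generated on concrete carriers (nat vertices, nat edges).\<close>
inductive melonic_gen :: "nat set \<Rightarrow> nat set \<Rightarrow> nat set \<Rightarrow> (nat \<Rightarrow> nat set) \<Rightarrow> (nat \<Rightarrow> nat) \<Rightarrow> bool"
  for A :: "nat set" where
  base: "\<lbrakk> finite A; card A \<ge> 2; x \<noteq> y; finite E; bij_betw col E A; \<forall>e\<in>E. ends e = {x, y} \<rbrakk>
     \<Longrightarrow> melonic_gen A {x, y} E ends col"
| insert: "\<lbrakk> melonic_gen A V E ends col; e \<in> E; col e = a; ends e = {u, v};
      x \<notin> V; y \<notin> V; x \<noteq> y;
      finite F; F \<inter> E = {}; e1 \<notin> E \<union> F; e2 \<notin> E \<union> F; e1 \<noteq> e2;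
      bij_betw col' F (A - {a}); \<forall>f\<in>F. ends' f = {x, y};
      ends' e1 = {u, x}; ends' e2 = {y, v}; col' e1 = a; col' e2 = a;
      \<forall>g\<in>E - {e}. ends' g = ends g \<and> col' g = col g \<rbrakk>
     \<Longrightarrow> melonic_gen A (V \<union> {x, y}) ((E - {e}) \<union> F \<union> {e1, e2}) ends' col'"

definition colored_iso ::
  "'v1 set \<Rightarrow> 'e1 set \<Rightarrow> ('e1 \<Rightarrow> 'v1 set) \<Rightarrow> ('e1 \<Rightarrow> nat) \<Rightarrow>
   'v2 set \<Rightarrow> 'e2 set \<Rightarrow> ('e2 \<Rightarrow> 'v2 set) \<Rightarrow> ('e2 \<Rightarrow> nat) \<Rightarrow> bool" where
  "colored_iso V1 E1 ends1 col1 V2 E2 ends2 col2 \<longleftrightarrow>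
     (\<exists>\<phi> \<psi>. bij_betw \<phi> V1 V2 \<and> bij_betw \<psi> E1 E2 \<and>
        (\<forall>e\<in>E1. ends2 (\<psi> e) = \<phi> ` ends1 e \<and> col2 (\<psi> e) = col1 e))"

definition melonic :: "nat set \<Rightarrow> 'v set \<Rightarrow> 'e set \<Rightarrow> ('e \<Rightarrow> 'v set) \<Rightarrow> ('e \<Rightarrow> nat) \<Rightarrow> bool" where
  "melonic A V E ends col \<longleftrightarrow>
     (\<exists>V' E' ends' col'. melonic_gen A V' E' ends' col' \<and> colored_iso V E ends col V' E' ends' col')"

end

theory Submission
  imports Defs
begin

lemma has_cycle_mono:
  assumes "has_cycle V1 E1 ends" "V1 \<subseteq> V2" "E1 \<subseteq> E2"
  shows "has_cycle V2 E2 ends"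
  using assms unfolding has_cycle_def by blast

lemma has_cycle_transfer:
  assumes "has_cycle V1 E1 ends1" "inj_on h V1" "inj_on g E1" "h ` V1 \<subseteq> V2" "g ` E1 \<subseteq> E2"
    "\<forall>e\<in>E1. ends2 (g e) = h ` ends1 e"
  shows "has_cycle V2 E2 ends2"
proof -
  obtain vs es where c: "length vs = length es" "length es \<ge> 1"
      "distinct vs" "distinct es" "set vs \<subseteq> V1" "set es \<subseteq> E1"
      "\<forall>k < length es. ends1 (es ! k) = {vs ! k, vs ! ((k + 1) mod length es)}"
    using assms(1) unfolding has_cycle_def by blast
  have "distinct (map h vs)" using c assms(2) by (simp add: distinct_map inj_on_subset)
  moreover have "distinct (map g es)" using c assms(3) by (simp add: distinct_map inj_on_subset)
  moreover have "\<forall>k < length (map g es). ends2 (map g es ! k) = {map h vs ! k, map h vs ! ((k + 1) mod length (map g es))}"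
  proof (intro allI impI)
    fix k assume k: "k < length (map g es)"
    have "es ! k \<in> E1" using c k by auto
    moreover have "(k+1) mod length es < length vs" using c k by (metis One_nat_def Suc_le_eq mod_less_divisor)
    ultimately show "ends2 (map g es ! k) = {map h vs ! k, map h vs ! ((k + 1) mod length (map g es))}"
      using c k assms(6) by auto
  qed
  ultimately show ?thesis unfolding has_cycle_def using c assms(4,5)
    by (rule_tac x="map h vs" in exI, rule_tac x="map g es" in exI) (auto, blast+)
qed

lemma cycle_in_component:
  assumes "has_cycle V E ends" "\<forall>e\<in>E. ends e \<subseteq> V"
  shows "\<not> all_components_trees V E ends"
proof -
  obtain vs es where c: "length vs = length es" "length es \<ge> 1"
      "distinct vs" "distinct es" "set vs \<subseteq> V" "set es \<subseteq> E"
      "\<forall>k < length es. ends (es ! k) = {vs ! k, vs ! ((k + 1) mod length es)}"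
    using assms(1) unfolding has_cycle_def by blast
  define v0 where "v0 = vs ! 0"
  have v0V: "v0 \<in> V" using c unfolding v0_def by (metis One_nat_def Suc_le_eq nth_mem subsetD)
  define C where "C = component V E ends v0"
  have reach: "(v0, vs ! k) \<in> (adj {e\<in>E. ends e \<subseteq> V} ends)\<^sup>*" if "k < length vs" for k
    using that
  proof (induction k)
    case 0 then show ?case unfolding v0_def by simp
  next
    case (Suc k)
    then have k: "k < length es" using c by simp
    have "(k + 1) mod length es = Suc k" using Suc.prems c by simp
    then have "ends (es ! k) = {vs ! k, vs ! Suc k}" using c k by simp
    moreover have "es ! k \<in> E" using c k by auto
    ultimately have "(vs ! k, vs ! Suc k) \<in> adj {e\<in>E. ends e \<subseteq> V} ends"
      unfolding adj_def using assms(2) by blast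
    then show ?case using Suc by (meson Suc_lessD rtrancl.rtrancl_into_rtrancl)
  qed
  have vsC: "set vs \<subseteq> C"
  proof
    fix x assume "x \<in> set vs"
    then obtain k where "k < length vs" "x = vs ! k" by (metis in_set_conv_nth)
    then show "x \<in> C" unfolding C_def component_def using reach c by auto
  qed
  have esC: "set es \<subseteq> edges_within E ends C"
  proof
    fix e assume "e \<in> set es"
    then obtain k where k: "k < length es" "e = es ! k" by (metis in_set_conv_nth)
    have "(k + 1) mod length es < length vs" using c k by (metis One_nat_def Suc_le_eq mod_less_divisor)
    then have "ends e \<subseteq> C" using c k vsC by auto
    then show "e \<in> edges_within E ends C" unfolding edges_within_def using c k by auto
  qed
  have "has_cycle C (edges_within E ends C) ends"
    unfolding has_cycle_def using c vsC esC by blast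
  then show ?thesis unfolding all_components_trees_def is_tree_def C_def using v0V by blast
qed

lemma two_set_idx:
  assumes L: "length vs = L" "L \<ge> 3" "distinct vs" "s < L" "t < L"
    and eq: "{vs ! s, vs ! ((s+1) mod L)} = {vs ! t, vs ! ((t+1) mod L)}"
  shows "s = t"
proof (rule ccontr)
  assume st: "s \<noteq> t"
  have inj: "\<And>i j. i < L \<Longrightarrow> j < L \<Longrightarrow> vs ! i = vs ! j \<Longrightarrow> i = j"
    using L by (simp add: nth_eq_iff_index_eq)
  have ms: "(s+1) mod L < L" "(t+1) mod L < L" using L by auto
  have "vs ! s \<noteq> vs ! t" using inj L st by blast
  then have "vs ! s = vs ! ((t+1) mod L) \<and> vs ! ((s+1) mod L) = vs ! t" using eq by (auto simp: doubleton_eq_iff)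
  then have a: "s = (t+1) mod L" and b: "(s+1) mod L = t" using inj L ms by blast+
  show False
  proof (cases "t + 1 < L")
    case True
    then have "s = t + 1" using a by simp
    show ?thesis
    proof (cases "s + 1 < L")
      case True
      then show ?thesis using b \<open>s = t+1\<close> by simp
    next
      case False
      then have "s + 1 = L" using L by simp
      then show ?thesis using b \<open>s = t+1\<close> L(2) by simp
    qed
  next
    case False
    then have "t + 1 = L" using L by simp
    then have "s = 0" using a by simp
    then show ?thesis using b L(2) \<open>t+1 = L\<close> by simp
  qed
qed

lemma min_deg2_cycle:
  assumes fin: "finite X" and ne: "X \<noteq> {}" and sub: "X \<subseteq> V"
    and deg: "\<forall>x\<in>X. \<exists>e1 e2 y1 y2. e1\<in>E \<and> e2\<in>E \<and> y1\<in>X \<and> y2\<in>X \<and> y1\<noteq>y2 \<and>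
               ends e1 = {x,y1} \<and> ends e2 = {x,y2} \<and> y1 \<noteq> x \<and> y2 \<noteq> x"
  shows "has_cycle V E ends"
proof -
  define path where "path p \<longleftrightarrow> p \<noteq> [] \<and> distinct p \<and> set p \<subseteq> X \<and>
     (\<forall>j. Suc j < length p \<longrightarrow> (\<exists>e\<in>E. ends e = {p!j, p!Suc j}))" for p
  obtain x0 where "x0 \<in> X" using ne by blast
  then have p0: "path [x0]" unfolding path_def by simp
  have bnd: "\<forall>p. path p \<longrightarrow> length p < card X + 1"
  proof (intro allI impI)
    fix p assume "path p"
    then have "card (set p) \<le> card X" using fin card_mono unfolding path_def by blast
    then show "length p < card X + 1" using \<open>path p\<close> distinct_card unfolding path_def by fastforce
  qed
  obtain p where pp: "path p" and pmax: "\<forall>p'. path p' \<longrightarrow> length p' \<le> length p"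
    using ex_has_greatest_nat[of path "[x0]" length "card X + 1"] p0 bnd by blast
  have pne: "p \<noteq> []" and pd: "distinct p" and pX: "set p \<subseteq> X"
    and padj: "\<And>j. Suc j < length p \<Longrightarrow> \<exists>e\<in>E. ends e = {p!j, p!Suc j}"
    using pp unfolding path_def by auto
  define x where "x = p ! 0"
  have xX: "x \<in> X" using pne pX unfolding x_def by (simp add: subset_iff)
  obtain e1 e2 y1 y2 where d: "e1\<in>E" "e2\<in>E" "y1\<in>X" "y2\<in>X" "y1\<noteq>y2"
     "ends e1 = {x,y1}" "ends e2 = {x,y2}" "y1 \<noteq> x" "y2 \<noteq> x"
    using deg xX by blast
  obtain y e where ye: "e \<in> E" "y \<in> X" "y \<noteq> x" "ends e = {x,y}" "length p \<ge> 2 \<longrightarrow> y \<noteq> p!1"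
  proof (cases "length p \<ge> 2 \<and> y1 = p!1")
    case True then show ?thesis using that[of e2 y2] d by auto
  next
    case False then show ?thesis using that[of e1 y1] d by auto
  qed
  have "y \<in> set p"
  proof (rule ccontr)
    assume ny: "y \<notin> set p"
    have "path (y # p)" unfolding path_def
    proof (intro conjI allI impI)
      show "distinct (y # p)" using ny pd by simp
      show "set (y # p) \<subseteq> X" using ye pX by simp
    next
      fix j assume j: "Suc j < length (y # p)"
      show "\<exists>e\<in>E. ends e = {(y # p) ! j, (y # p) ! Suc j}"
      proof (cases j)
        case 0 then show ?thesis using ye unfolding x_def by (auto simp: insert_commute)
      next
        case (Suc j') then show ?thesis using padj[of j'] j by simp
      qed
    qed simp
    then show False using pmax by fastforce
  qed
  then obtain j where j: "j < length p" "p ! j = y" by (metis in_set_conv_nth)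
  have j2: "j \<ge> 2"
  proof -
    have j0: "j \<noteq> 0"
    proof
      assume "j = 0" then show False using j ye unfolding x_def by simp
    qed
    moreover have "j \<noteq> 1"
    proof
      assume "j = 1" then show False using j ye by auto
    qed
    ultimately show ?thesis by simp
  qed
  define L where "L = Suc j"
  define vs where "vs = take L p"
  define ef where "ef t = (SOME e. e \<in> E \<and> ends e = {p!t, p!Suc t})" for t
  define es where "es = map ef [0..<j] @ [e]"
  have efp: "ef t \<in> E \<and> ends (ef t) = {p!t, p!Suc t}" if "t < j" for t
  proof -
    have "\<exists>e. e \<in> E \<and> ends e = {p!t, p!Suc t}" using padj[of t] that j by auto
    then show ?thesis unfolding ef_def by (rule someI_ex)
  qed
  have lvs: "length vs = L" using j unfolding vs_def L_def by simp
  have les: "length es = L" unfolding es_def L_def by simp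
  have vsn: "vs ! i = p ! i" if "i < L" for i using that unfolding vs_def by simp
  have dvs: "distinct vs" unfolding vs_def using pd by simp
  have ends_es: "ends (es ! k) = {vs ! k, vs ! ((k + 1) mod L)}" if k: "k < L" for k
  proof (cases "k < j")
    case True
    then have "(k+1) mod L = Suc k" unfolding L_def by simp
    moreover have "es ! k = ef k" unfolding es_def using True by (simp add: nth_append)
    ultimately show ?thesis using efp[OF True] vsn k True unfolding L_def by simp
  next
    case False
    then have "k = j" using k unfolding L_def by simp
    then have "es ! k = e" unfolding es_def by (simp add: nth_append)
    moreover have "(k+1) mod L = 0" using \<open>k = j\<close> unfolding L_def by simp
    ultimately show ?thesis using ye vsn j \<open>k = j\<close> unfolding x_def L_def by (auto simp: insert_commute)
  qed
  have des: "distinct es"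
    unfolding distinct_conv_nth
  proof (intro allI impI)
    fix s t assume st: "s < length es" "t < length es" "s \<noteq> t"
    show "es ! s \<noteq> es ! t"
    proof
      assume "es ! s = es ! t"
      then have "{vs ! s, vs ! ((s+1) mod L)} = {vs ! t, vs ! ((t+1) mod L)}"
        using ends_es st les by metis
      then have "s = t" using two_set_idx[OF lvs _ dvs] st les j2 unfolding L_def by simp
      then show False using st by simp
    qed
  qed
  have svs: "set vs \<subseteq> V" unfolding vs_def using pX sub set_take_subset by (metis subset_trans)
  have ses: "set es \<subseteq> E" unfolding es_def using efp ye by auto
  have "length vs = length es \<and> length es \<ge> 1 \<and> distinct vs \<and> distinct es \<and> set vs \<subseteq> V \<and> set es \<subseteq> E \<and>
      (\<forall>k < length es. ends (es ! k) = {vs ! k, vs ! ((k + 1) mod length es)})"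
    using lvs les dvs des svs ses ends_es by (simp add: L_def)
  then show ?thesis unfolding has_cycle_def by blast
qed

definition forb :: "('a \<Rightarrow> 'a) \<Rightarrow> 'a \<Rightarrow> 'a set" where
  "forb f x = {(f ^^ n) x | n. True}"

lemma forb_self: "x \<in> forb f x" unfolding forb_def by (auto intro: exI[of _ 0])

lemma forb_step: "y \<in> forb f x \<Longrightarrow> f y \<in> forb f x"
proof -
  assume "y \<in> forb f x"
  then obtain n where "y = (f ^^ n) x" unfolding forb_def by blast
  then have "f y = (f ^^ Suc n) x" by simp
  then show ?thesis unfolding forb_def by blast
qed

lemma forb_trans: "y \<in> forb f x \<Longrightarrow> forb f y \<subseteq> forb f x"
proof
  fix u assume "y \<in> forb f x" "u \<in> forb f y"
  then obtain n k where "y = (f ^^ n) x" "u = (f ^^ k) y" unfolding forb_def by blast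
  then have "u = (f ^^ (k + n)) x" by (simp add: funpow_add)
  then show "u \<in> forb f x" unfolding forb_def by blast
qed

lemma forb_closed: "\<forall>z\<in>B. f z \<in> B \<Longrightarrow> x \<in> B \<Longrightarrow> forb f x \<subseteq> B"
proof -
  assume a: "\<forall>z\<in>B. f z \<in> B" "x \<in> B"
  have "(f ^^ n) x \<in> B" for n by (induction n) (use a in auto)
  then show ?thesis unfolding forb_def by auto
qed

lemma funpow_cancel:
  assumes "inj_on f B" "\<forall>z\<in>B. f z \<in> B" "x \<in> B" "(f ^^ i) x = (f ^^ j) x" "i < j"
  shows "(f ^^ (j - i)) x = x"
  using assms(4,5)
proof (induction i arbitrary: j)
  case 0 then show ?case by simp
next
  case (Suc i)
  then obtain j' where j': "j = Suc j'" by (cases j) auto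
  have inB: "(f ^^ n) x \<in> B" for n by (induction n) (use assms in auto)
  have "f ((f ^^ i) x) = f ((f ^^ j') x)" using Suc.prems j' by simp
  then have "(f ^^ i) x = (f ^^ j') x" using assms(1) inB by (meson inj_onD)
  then show ?case using Suc j' by simp
qed

lemma funpow_periodic:
  assumes fin: "finite B" and inj: "inj_on f B" and cl: "\<forall>z\<in>B. f z \<in> B" and x: "x \<in> B"
  shows "\<exists>n>0. (f ^^ n) x = x"
proof -
  define g where "g n = (f ^^ n) x" for n
  have inB: "g n \<in> B" for n unfolding g_def by (induction n) (use cl x in auto)
  have "\<not> inj_on g {..card B}"
  proof
    assume "inj_on g {..card B}"
    then have "card (g ` {..card B}) = card B + 1" by (simp add: card_image)
    moreover have "card (g ` {..card B}) \<le> card B" using inB fin by (intro card_mono) auto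
    ultimately show False by simp
  qed
  then obtain i j where ij: "g i = g j" "i \<noteq> j" unfolding inj_on_def by blast
  show ?thesis
  proof (cases "i < j")
    case True
    then show ?thesis using funpow_cancel[OF inj cl x, of i j] ij unfolding g_def
      by (intro exI[of _ "j - i"]) auto
  next
    case False
    then have "j < i" using ij by simp
    then show ?thesis using funpow_cancel[OF inj cl x, of j i] ij unfolding g_def
      by (intro exI[of _ "i - j"]) auto
  qed
qed

lemma funpow_mult_fix: "(f ^^ n) x = x \<Longrightarrow> (f ^^ (n * k)) x = x"
proof (induction k)
  case 0 then show ?case by simp
next
  case (Suc k)
  have "(f ^^ (n * Suc k)) x = (f ^^ n) ((f ^^ (n * k)) x)"
    by (simp add: funpow_add[unfolded comp_def] mult.commute)
  then show ?case using Suc by simp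
qed

lemma forb_sym:
  assumes fin: "finite B" and inj: "inj_on f B" and cl: "\<forall>z\<in>B. f z \<in> B" and x: "x \<in> B"
    and y: "y \<in> forb f x"
  shows "x \<in> forb f y"
proof -
  obtain k where k: "y = (f ^^ k) x" using y unfolding forb_def by blast
  obtain n where n: "n > 0" "(f ^^ n) x = x" using funpow_periodic[OF fin inj cl x] by blast
  have nk: "n * k \<ge> k" using n by simp
  have "(f ^^ (n * k - k)) y = (f ^^ (n * k - k + k)) x"
    unfolding k by (simp add: funpow_add[unfolded comp_def])
  also have "\<dots> = x" using nk funpow_mult_fix[OF n(2)] by simp
  finally show ?thesis unfolding forb_def by blast
qed

lemma forb_eq:
  assumes "finite B" "inj_on f B" "\<forall>z\<in>B. f z \<in> B" "x \<in> B" "y \<in> forb f x"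
  shows "forb f y = forb f x"
  using forb_trans[OF assms(5)] forb_trans[OF forb_sym[OF assms]] by blast

lemma bypass:
  assumes bB: "b \<notin> B" and vB: "v \<in> B" and fv: "f v = b" and fb: "f b \<in> B" and gv: "g v = f b"
    and gz: "\<forall>z\<in>B. z \<noteq> v \<longrightarrow> g z = f z" and fcl: "\<forall>z\<in>B. f z \<in> B \<or> f z = b"
    and finj: "\<forall>z\<in>B. f z = b \<longrightarrow> z = v" and z: "z \<in> B"
  shows "forb g z = forb f z - {b}"
proof
  have gcl: "\<forall>y\<in>B. g y \<in> B"
  proof
    fix y assume y: "y \<in> B"
    show "g y \<in> B"
    proof (cases "y = v")
      case True then show ?thesis using gv fb by simp
    next
      case False then show ?thesis using gz fcl finj y by metis
    qed
  qed
  have "(g ^^ n) z \<in> forb f z \<and> (g ^^ n) z \<in> B" for n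
  proof (induction n)
    case 0 then show ?case using z forb_self by simp
  next
    case (Suc n)
    let ?y = "(g ^^ n) z"
    have "g ?y \<in> forb f z"
    proof (cases "?y = v")
      case True
      then have "g ?y = f (f ?y)" using gv fv by simp
      then show ?thesis using Suc forb_step by metis
    next
      case False
      then show ?thesis using Suc gz forb_step by metis
    qed
    then show ?case using Suc gcl by simp
  qed
  then show "forb g z \<subseteq> forb f z - {b}" unfolding forb_def using bB by auto
next
  have "((f ^^ n) z \<in> B \<and> (f ^^ n) z \<in> forb g z) \<or> ((f ^^ n) z = b \<and> v \<in> forb g z)" for n
  proof (induction n)
    case 0 then show ?case using z forb_self[of z g] by simp
  next
    case (Suc n)
    let ?y = "(f ^^ n) z"
    from Suc show ?case
    proof
      assume a: "?y \<in> B \<and> ?y \<in> forb g z"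
      show ?thesis
      proof (cases "f ?y = b")
        case True
        then have "?y = v" using finj a by blast
        then show ?thesis using a True by simp
      next
        case False
        then have "?y \<noteq> v" using fv by auto
        then have "g ?y = f ?y" using gz a by blast
        then show ?thesis using a False fcl forb_step by (metis funpow.simps(2) comp_apply)
      qed
    next
      assume a: "?y = b \<and> v \<in> forb g z"
      then have "f ?y = g v" using gv by simp
      then show ?thesis using a fb forb_step by (metis funpow.simps(2) comp_apply)
    qed
  qed
  then show "forb f z - {b} \<subseteq> forb g z" unfolding forb_def by auto
qed

definition msys :: "nat set \<Rightarrow> 'v set \<Rightarrow> (nat \<Rightarrow> 'v \<Rightarrow> 'v) \<Rightarrow> ('v \<Rightarrow> bool) \<Rightarrow> bool" where
  "msys A V m blk \<longleftrightarrow> finite V \<and> finite A \<and> 0 \<notin> A \<and> card A \<ge> 2 \<and>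
     (\<forall>k\<in>insert 0 A. \<forall>x\<in>V. m k x \<in> V \<and> m k x \<noteq> x \<and> m k (m k x) = x \<and> (blk (m k x) \<longleftrightarrow> \<not> blk x))"

definition sig :: "(nat \<Rightarrow> 'v \<Rightarrow> 'v) \<Rightarrow> nat \<Rightarrow> 'v \<Rightarrow> 'v" where
  "sig m i x = m 0 (m i x)"

definition orb :: "(nat \<Rightarrow> 'v \<Rightarrow> 'v) \<Rightarrow> nat \<Rightarrow> 'v \<Rightarrow> 'v set" where
  "orb m i x = forb (sig m i) x"

definition SV :: "nat set \<Rightarrow> 'v set \<Rightarrow> (nat \<Rightarrow> 'v \<Rightarrow> 'v) \<Rightarrow> ('v \<Rightarrow> bool) \<Rightarrow> ('v + nat \<times> 'v set) set" where
  "SV A V m blk = Inl ` {b\<in>V. blk b} \<union> {Inr (i, orb m i b) | i b. i \<in> A \<and> b \<in> V \<and> blk b}"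

definition SE :: "nat set \<Rightarrow> 'v set \<Rightarrow> ('v \<Rightarrow> bool) \<Rightarrow> ('v \<times> nat) set" where
  "SE A V blk = {(b, i). b \<in> V \<and> blk b \<and> i \<in> A}"

definition Sends :: "(nat \<Rightarrow> 'v \<Rightarrow> 'v) \<Rightarrow> 'v \<times> nat \<Rightarrow> ('v + nat \<times> 'v set) set" where
  "Sends m = (\<lambda>(b, i). {Inl b, Inr (i, orb m i b)})"

definition resrel :: "nat set \<Rightarrow> 'v set \<Rightarrow> (nat \<Rightarrow> 'v \<Rightarrow> 'v) \<Rightarrow> ('v \<times> 'v) set" where
  "resrel A U m = {(x, m k x) | x k. x \<in> U \<and> k \<in> A}"

definition res :: "nat set \<Rightarrow> 'v set \<Rightarrow> (nat \<Rightarrow> 'v \<Rightarrow> 'v) \<Rightarrow> 'v \<Rightarrow> 'v set" where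
  "res A U m v = {y. (v, y) \<in> (resrel A U m)\<^sup>*}"

definition rE :: "nat set \<Rightarrow> (nat \<Rightarrow> 'v \<Rightarrow> 'v) \<Rightarrow> 'v set \<Rightarrow> (nat \<times> 'v set) set" where
  "rE A m W = {(k, {z, m k z}) | z k. z \<in> W \<and> k \<in> A}"

lemma msysD:
  assumes "msys A V m blk" "k \<in> insert 0 A" "x \<in> V"
  shows "m k x \<in> V" "m k x \<noteq> x" "m k (m k x) = x" "blk (m k x) \<longleftrightarrow> \<not> blk x"
  using assms unfolding msys_def by blast+

lemma msysD2:
  assumes "msys A V m blk"
  shows "finite V" "finite A" "0 \<notin> A" "card A \<ge> 2"
  using assms unfolding msys_def by blast+

lemma sig_in:
  assumes "msys A V m blk" "i \<in> A" "x \<in> V"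
  shows "sig m i x \<in> V" "blk (sig m i x) = blk x"
  using msysD[OF assms(1)] assms(2,3) unfolding sig_def by auto

lemma sig_inj:
  assumes "msys A V m blk" "i \<in> A"
  shows "inj_on (sig m i) V"
proof
  fix x y assume xy: "x \<in> V" "y \<in> V" "sig m i x = sig m i y"
  have "m 0 (m 0 (m i x)) = m 0 (m 0 (m i y))" using xy unfolding sig_def by simp
  then have "m i x = m i y" using msysD[OF assms(1)] xy assms(2) by auto
  then have "m i (m i x) = m i (m i y)" by simp
  then show "x = y" using msysD[OF assms(1)] xy assms(2) by auto
qed

lemma sig_fix_iff:
  assumes "msys A V m blk" "i \<in> A" "x \<in> V"
  shows "sig m i x = x \<longleftrightarrow> m i x = m 0 x"
proof
  assume "sig m i x = x"
  then have "m 0 (m 0 (m i x)) = m 0 x" unfolding sig_def by simp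
  then show "m i x = m 0 x" using msysD[OF assms(1)] assms(2,3) by auto
next
  assume "m i x = m 0 x"
  then show "sig m i x = x" unfolding sig_def using msysD[OF assms(1)] assms(3) by auto
qed

lemma orb_sub:
  assumes "msys A V m blk" "i \<in> A" "x \<in> V"
  shows "orb m i x \<subseteq> V"
  unfolding orb_def using forb_closed[of V "sig m i" x] sig_in[OF assms(1,2)] assms(3) by blast

lemma orb_eq:
  assumes "msys A V m blk" "i \<in> A" "x \<in> V" "y \<in> orb m i x"
  shows "orb m i y = orb m i x"
  unfolding orb_def
  using forb_eq[of V "sig m i" x y] msysD2[OF assms(1)] sig_inj[OF assms(1,2)] sig_in[OF assms(1,2)] assms(3,4)
  unfolding orb_def by blast

lemma good_vertex:
  assumes ms: "msys A V m blk" and ne: "V \<noteq> {}"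
    and nc: "\<not> has_cycle (SV A V m blk) (SE A V blk) (Sends m)"
  shows "\<exists>b\<in>V. blk b \<and> (\<forall>k1\<in>A. \<forall>k2\<in>A. m k1 b \<noteq> m 0 b \<longrightarrow> m k2 b \<noteq> m 0 b \<longrightarrow> k1 = k2)"
proof (rule ccontr)
  assume neg: "\<not> ?thesis"
  define Bl where "Bl = {b\<in>V. blk b}"
  define X where "X = Inl ` Bl \<union> {Inr (i, orb m i b) | i b. i \<in> A \<and> b \<in> Bl \<and> sig m i b \<noteq> b}"
  have finV: "finite V" and finA: "finite A" using msysD2[OF ms] by auto
  have "X \<subseteq> Inl ` Bl \<union> (\<lambda>(i,b). Inr (i, orb m i b)) ` (A \<times> Bl)" unfolding X_def by auto
  moreover have "finite (Inl ` Bl \<union> (\<lambda>(i,b). Inr (i, orb m i b)) ` (A \<times> Bl))"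
    using finV finA unfolding Bl_def by auto
  ultimately have finX: "finite X" by (rule finite_subset)
  obtain x where x: "x \<in> V" using ne by blast
  have "Bl \<noteq> {}"
  proof (cases "blk x")
    case True then show ?thesis using x unfolding Bl_def by auto
  next
    case False then have "m 0 x \<in> Bl" using msysD[OF ms, of 0 x] x unfolding Bl_def by auto
    then show ?thesis by auto
  qed
  then have neX: "X \<noteq> {}" unfolding X_def by auto
  have subX: "X \<subseteq> SV A V m blk" unfolding X_def SV_def Bl_def by auto
  have deg: "\<forall>x\<in>X. \<exists>e1 e2 y1 y2. e1\<in>SE A V blk \<and> e2\<in>SE A V blk \<and> y1\<in>X \<and> y2\<in>X \<and> y1\<noteq>y2 \<and>
               Sends m e1 = {x,y1} \<and> Sends m e2 = {x,y2} \<and> y1 \<noteq> x \<and> y2 \<noteq> x"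
  proof
    fix z assume "z \<in> X"
    then consider (W) b where "b \<in> Bl" "z = Inl b"
      | (C) i b where "i \<in> A" "b \<in> Bl" "sig m i b \<noteq> b" "z = Inr (i, orb m i b)"
      unfolding X_def by blast
    then show "\<exists>e1 e2 y1 y2. e1\<in>SE A V blk \<and> e2\<in>SE A V blk \<and> y1\<in>X \<and> y2\<in>X \<and> y1\<noteq>y2 \<and>
               Sends m e1 = {z,y1} \<and> Sends m e2 = {z,y2} \<and> y1 \<noteq> z \<and> y2 \<noteq> z"
    proof cases
      case W
      then have bV: "b \<in> V" "blk b" unfolding Bl_def by auto
      then obtain k1 k2 where k: "k1 \<in> A" "k2 \<in> A" "m k1 b \<noteq> m 0 b" "m k2 b \<noteq> m 0 b" "k1 \<noteq> k2"
        using neg by blast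
      have s: "sig m k1 b \<noteq> b" "sig m k2 b \<noteq> b" using sig_fix_iff[OF ms] k bV by auto
      show ?thesis
        apply (rule exI[of _ "(b, k1)"], rule exI[of _ "(b, k2)"])
        apply (rule exI[of _ "Inr (k1, orb m k1 b)"], rule exI[of _ "Inr (k2, orb m k2 b)"])
        using W k s bV unfolding SE_def Sends_def X_def by auto
    next
      case C
      then have bV: "b \<in> V" "blk b" unfolding Bl_def by auto
      have sb: "sig m i b \<in> V" "blk (sig m i b)" using sig_in[OF ms C(1) bV(1)] bV by auto
      have "sig m i b \<in> orb m i b" unfolding orb_def by (rule forb_step[OF forb_self])
      then have oe: "orb m i (sig m i b) = orb m i b" using orb_eq[OF ms C(1) bV(1)] by blast
      show ?thesis
        apply (rule exI[of _ "(b, i)"], rule exI[of _ "(sig m i b, i)"])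
        apply (rule exI[of _ "Inl b"], rule exI[of _ "Inl (sig m i b)"])
        using C bV sb oe unfolding SE_def Sends_def X_def Bl_def by (auto simp: insert_commute)
    qed
  qed
  have "has_cycle (SV A V m blk) (SE A V blk) (Sends m)"
    by (rule min_deg2_cycle[OF finX neX subX deg])
  then show False using nc by simp
qed

lemma res_refl: "v \<in> res A U m v" unfolding res_def by simp

lemma res_sub:
  assumes "\<forall>x\<in>U. \<forall>k\<in>A. m k x \<in> U" "v \<in> U"
  shows "res A U m v \<subseteq> U"
proof
  fix y assume "y \<in> res A U m v"
  then have "(v, y) \<in> (resrel A U m)\<^sup>*" unfolding res_def by simp
  then show "y \<in> U"
    by (induction rule: rtrancl_induct) (use assms in \<open>auto simp: resrel_def\<close>)
qed

lemma res_closed: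
  assumes "y \<in> res A U m v" "y \<in> U" "k \<in> A"
  shows "m k y \<in> res A U m v"
proof -
  have "(y, m k y) \<in> resrel A U m" unfolding resrel_def using assms by blast
  then show ?thesis using assms(1) unfolding res_def by (simp add: rtrancl_into_rtrancl)
qed

lemma res_sym:
  assumes inv: "\<forall>x\<in>U. \<forall>k\<in>A. m k x \<in> U \<and> m k (m k x) = x" and v: "v \<in> U" and y: "y \<in> res A U m v"
  shows "v \<in> res A U m y"
proof -
  have "(v, y) \<in> (resrel A U m)\<^sup>*" using y unfolding res_def by simp
  then have "(y, v) \<in> (resrel A U m)\<^sup>*"
  proof (induction rule: rtrancl_induct)
    case base then show ?case by simp
  next
    case (step a c)
    then obtain k where k: "a \<in> U" "k \<in> A" "c = m k a" unfolding resrel_def by blast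
    then have "(c, a) \<in> resrel A U m" unfolding resrel_def using inv by force
    then show ?case using step by (meson converse_rtrancl_into_rtrancl)
  qed
  then show ?thesis unfolding res_def by simp
qed

lemma res_eq:
  assumes inv: "\<forall>x\<in>U. \<forall>k\<in>A. m k x \<in> U \<and> m k (m k x) = x" and v: "v \<in> U" and y: "y \<in> res A U m v"
  shows "res A U m y = res A U m v"
proof -
  have "v \<in> res A U m y" using res_sym[OF assms] .
  then show ?thesis using y unfolding res_def by (auto intro: rtrancl_trans)
qed

lemma res_transfer:
  assumes cl: "\<forall>x\<in>U. \<forall>k\<in>A. m k x \<in> U" and v0: "v0 \<in> U"
    and W: "W = res A U m v0" and sub: "W \<subseteq> U'" and agree: "\<forall>z\<in>W. \<forall>k\<in>A. m' k z = m k z"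
  shows "res A U' m' v0 = W"
proof
  have WU: "W \<subseteq> U" using res_sub[OF cl v0] W by simp
  show "res A U' m' v0 \<subseteq> W"
  proof
    fix y assume "y \<in> res A U' m' v0"
    then have "(v0, y) \<in> (resrel A U' m')\<^sup>*" unfolding res_def by simp
    then show "y \<in> W"
    proof (induction rule: rtrancl_induct)
      case base then show ?case using W res_refl by simp
    next
      case (step a c)
      then obtain k where k: "k \<in> A" "c = m' k a" unfolding resrel_def by blast
      then have "c = m k a" using agree step by simp
      then show ?case using res_closed[of a A U m v0 k] step k WU W by auto
    qed
  qed
  show "W \<subseteq> res A U' m' v0"
  proof
    fix y assume "y \<in> W"
    then have "(v0, y) \<in> (resrel A U m)\<^sup>*" using W unfolding res_def by simp
    then have "(v0, y) \<in> (resrel A U' m')\<^sup>*"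
    proof (induction rule: rtrancl_induct)
      case base then show ?case by simp
    next
      case (step a c)
      then obtain k where k: "k \<in> A" "c = m k a" "a \<in> U" unfolding resrel_def by blast
      have aW: "a \<in> W" using step(1) W unfolding res_def by simp
      then have "(a, c) \<in> resrel A U' m'" unfolding resrel_def using k agree sub by force
      then show ?case using step by (meson rtrancl_into_rtrancl)
    qed
    then show "y \<in> res A U' m' v0" unfolding res_def by simp
  qed
qed

lemma melonic_gen_finite:
  assumes "melonic_gen A V E ends col"
  shows "finite V \<and> finite E"
  using assms by (induction rule: melonic_gen.induct) auto

lemma iso_melonic:
  assumes iso: "colored_iso V1 E1 ends1 col1 V2 E2 ends2 col2"
    and mel: "melonic A V2 E2 ends2 col2"
  shows "melonic A V1 E1 ends1 col1"
proof -
  obtain \<phi> \<psi> where i1: "bij_betw \<phi> V1 V2" "bij_betw \<psi> E1 E2"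
      "\<forall>e\<in>E1. ends2 (\<psi> e) = \<phi> ` ends1 e \<and> col2 (\<psi> e) = col1 e"
    using iso unfolding colored_iso_def by blast
  obtain V3 E3 ends3 col3 where m: "melonic_gen A V3 E3 ends3 col3"
    and i2: "colored_iso V2 E2 ends2 col2 V3 E3 ends3 col3"
    using mel unfolding melonic_def by blast
  obtain \<phi>' \<psi>' where j: "bij_betw \<phi>' V2 V3" "bij_betw \<psi>' E2 E3"
      "\<forall>e\<in>E2. ends3 (\<psi>' e) = \<phi>' ` ends2 e \<and> col3 (\<psi>' e) = col2 e"
    using i2 unfolding colored_iso_def by blast
  have "bij_betw (\<phi>' \<circ> \<phi>) V1 V3" "bij_betw (\<psi>' \<circ> \<psi>) E1 E3"
    using i1 j by (auto intro: bij_betw_trans)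
  moreover have "\<forall>e\<in>E1. ends3 ((\<psi>' \<circ> \<psi>) e) = (\<phi>' \<circ> \<phi>) ` ends1 e \<and> col3 ((\<psi>' \<circ> \<psi>) e) = col1 e"
  proof
    fix e assume e: "e \<in> E1"
    then have "\<psi> e \<in> E2" using i1 bij_betwE by blast
    then show "ends3 ((\<psi>' \<circ> \<psi>) e) = (\<phi>' \<circ> \<phi>) ` ends1 e \<and> col3 ((\<psi>' \<circ> \<psi>) e) = col1 e"
      using i1 j e by (simp add: image_comp)
  qed
  ultimately have "colored_iso V1 E1 ends1 col1 V3 E3 ends3 col3"
    unfolding colored_iso_def by blast
  then show ?thesis unfolding melonic_def using m by blast
qed

lemma melonic_base:
  assumes finA: "finite A" and cA: "card A \<ge> 2" and bw: "b \<noteq> w"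
    and mk: "\<forall>k\<in>A. m k b = w \<and> m k w = b"
  shows "melonic A {b, w} (rE A m {b, w}) snd fst"
proof -
  have "melonic_gen A {0, 1} A (\<lambda>_. {0, 1::nat}) id"
    by (rule melonic_gen.base) (use finA cA in auto)
  moreover have "colored_iso {b, w} (rE A m {b, w}) snd fst {0, 1} A (\<lambda>_. {0, 1::nat}) id"
  proof -
    define \<phi> where "\<phi> z = (if z = b then 0 else 1::nat)" for z
    have re: "rE A m {b, w} = (\<lambda>k. (k, {b, w})) ` A"
      unfolding rE_def using mk bw by (auto simp: insert_commute) (metis insert_commute)
    have "bij_betw \<phi> {b, w} {0, 1}" unfolding \<phi>_def bij_betw_def inj_on_def using bw by auto
    moreover have "bij_betw fst (rE A m {b, w}) A" unfolding re bij_betw_def inj_on_def by force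
    moreover have "\<forall>e\<in>rE A m {b, w}. {0, 1} = \<phi> ` snd e \<and> id (fst e) = fst e"
      unfolding re \<phi>_def using bw by auto
    ultimately show ?thesis unfolding colored_iso_def by blast
  qed
  ultimately show ?thesis unfolding melonic_def by blast
qed

lemma melonic_insert:
  assumes finA: "finite A" and aA: "a \<in> A" and A0: "0 \<notin> A"
    and bW: "b \<in> W" "w \<in> W" "b \<noteq> w"
    and mk: "\<forall>k\<in>A-{a}. m k b = w \<and> m k w = b"
    and ma: "m a b = u" "m a u = b" "m a w = v" "m a v = w"
    and uv: "u \<in> W" "v \<in> W" "u \<notin> {b,w}" "v \<notin> {b,w}" "u \<noteq> v"
    and cl: "\<forall>z\<in>W. \<forall>k\<in>A. m k z \<in> W \<and> m k (m k z) = z"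
    and m'1: "\<forall>k z. k \<noteq> a \<longrightarrow> m' k z = m k z"
    and m'2: "m' a = (\<lambda>z. if z = u then v else if z = v then u else m a z)"
    and mel: "melonic A (W - {b,w}) (rE A m' (W - {b,w})) snd fst"
  shows "melonic A W (rE A m W) snd fst"
proof -
  define W' where "W' = W - {b,w}"
  define E' where "E' = rE A m' W'"
  define E where "E = rE A m W"
  define ea where "ea = (a, {u,v})"
  define Fm where "Fm = (\<lambda>k. (k, {b,w})) ` (A - {a})"
  define e1m where "e1m = (a, {b,u})"
  define e2m where "e2m = (a, {w,v})"
  have inv: "m k (m k z) = z" "m k z \<in> W" if "z \<in> W" "k \<in> A" for z k
    using cl that by auto
  have m'W: "m' k z \<in> W'" if zW: "z \<in> W'" and kA: "k \<in> A" for z k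
  proof (cases "k = a")
    case True
    show ?thesis
    proof (cases "z = u \<or> z = v")
      case True then show ?thesis using \<open>k = a\<close> m'2 uv unfolding W'_def by auto
    next
      case False
      have z: "z \<in> W" "z \<noteq> u" "z \<noteq> v" using zW False unfolding W'_def by auto
      have "m' k z = m a z" using m'2 \<open>k = a\<close> z by simp
      moreover have "m a z \<noteq> b"
      proof
        assume "m a z = b" then have "m a (m a z) = u" using ma by simp
        then show False using inv[OF z(1) aA] z by simp
      qed
      moreover have "m a z \<noteq> w"
      proof
        assume "m a z = w" then have "m a (m a z) = v" using ma by simp
        then show False using inv[OF z(1) aA] z by simp
      qed
      ultimately show ?thesis using inv[OF z(1) aA] unfolding W'_def by auto
    qed
  next
    case False
    have z: "z \<in> W" "z \<noteq> b" "z \<noteq> w" using zW unfolding W'_def by auto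
    have kk: "k \<in> A - {a}" using kA False by simp
    have "m' k z = m k z" using m'1 False by simp
    moreover have "m k z \<noteq> b"
    proof
      assume "m k z = b" then have "m k (m k z) = w" using mk kk by simp
      then show False using inv[OF z(1) kA] z by simp
    qed
    moreover have "m k z \<noteq> w"
    proof
      assume "m k z = w" then have "m k (m k z) = b" using mk kk by simp
      then show False using inv[OF z(1) kA] z by simp
    qed
    ultimately show ?thesis using inv[OF z(1) kA] unfolding W'_def by auto
  qed
  have E'snd: "snd g \<subseteq> W'" if gE: "g \<in> E'" for g
  proof -
    obtain z k where "g = (k, {z, m' k z})" "z \<in> W'" "k \<in> A" using gE unfolding E'_def rE_def by blast
    then show ?thesis using m'W by simp
  qed
  have eaE': "ea \<in> E'" unfolding ea_def E'_def rE_def W'_def using uv aA m'2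
    by (rule_tac CollectI, rule_tac x=u in exI, rule_tac x=a in exI) auto
  have Edecomp: "E = (E' - {ea}) \<union> Fm \<union> {e1m} \<union> {e2m}"
  proof
    show "E \<subseteq> (E' - {ea}) \<union> Fm \<union> {e1m} \<union> {e2m}"
    proof
      fix g assume "g \<in> E"
      then obtain z k where g: "g = (k, {z, m k z})" "z \<in> W" "k \<in> A" unfolding E_def rE_def by blast
      show "g \<in> (E' - {ea}) \<union> Fm \<union> {e1m} \<union> {e2m}"
      proof (cases "z = b \<or> z = w")
        case True
        show ?thesis
        proof (cases "k = a")
          case True
          then show ?thesis using \<open>z = b \<or> z = w\<close> g ma unfolding e1m_def e2m_def by auto
        next
          case False
          then have "g = (k, {b,w})" using \<open>z = b \<or> z = w\<close> g mk by (auto simp: insert_commute)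
          then show ?thesis unfolding Fm_def using False g by auto
        qed
      next
        case False
        then have zW': "z \<in> W'" using g unfolding W'_def by auto
        show ?thesis
        proof (cases "k = a")
          case True
          show ?thesis
          proof (cases "z = u \<or> z = v")
            case True
            then show ?thesis using \<open>k = a\<close> g ma unfolding e1m_def e2m_def by (auto simp: insert_commute)
          next
            case zn: False
            then have "m' k z = m k z" using m'2 \<open>k = a\<close> by simp
            then have "g \<in> E'" unfolding E'_def rE_def using g zW' by fastforce
            moreover have "g \<noteq> ea"
            proof
              assume "g = ea"
              then have "{z, m k z} = {u, v}" using g unfolding ea_def by (metis prod.inject)
              then show False using zn by (auto simp: doubleton_eq_iff)
            qed
            ultimately show ?thesis by blast
          qed
        next
          case False
          then have "m' k z = m k z" using m'1 by simp
          then have "g \<in> E'" unfolding E'_def rE_def using g zW' by fastforce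
          moreover have "g \<noteq> ea" using False g unfolding ea_def by simp
          ultimately show ?thesis by blast
        qed
      qed
    qed
  next
    show "(E' - {ea}) \<union> Fm \<union> {e1m} \<union> {e2m} \<subseteq> E"
    proof
      fix g assume g0: "g \<in> (E' - {ea}) \<union> Fm \<union> {e1m} \<union> {e2m}"
      show "g \<in> E"
      proof (cases "g \<in> E' - {ea}")
        case True
        then obtain z k where g: "g = (k, {z, m' k z})" "z \<in> W'" "k \<in> A" "g \<noteq> ea"
          unfolding E'_def rE_def by blast
        have "m' k z = m k z"
        proof (cases "k = a")
          case True
          have "z \<noteq> u"
          proof
            assume "z = u" then show False using g True m'2 unfolding ea_def by simp
          qed
          moreover have "z \<noteq> v"
          proof
            assume "z = v" then show False using g True m'2 uv(5) unfolding ea_def by (simp add: insert_commute)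
          qed
          ultimately show ?thesis using True m'2 by simp
        next
          case False then show ?thesis using m'1 by simp
        qed
        then show ?thesis unfolding E_def rE_def using g unfolding W'_def by auto
      next
        case False
        then have "g \<in> Fm \<or> g = e1m \<or> g = e2m" using g0 by blast
        then consider (F) k where "k \<in> A - {a}" "g = (k, {b,w})" | (E1) "g = e1m" | (E2) "g = e2m"
          unfolding Fm_def by blast
        then show ?thesis
        proof cases
          case F
          then have "g = (k, {b, m k b})" using mk by simp
          then show ?thesis unfolding E_def rE_def using F bW by blast
        next
          case E1
          then have "g = (a, {b, m a b})" using ma unfolding e1m_def by simp
          then show ?thesis unfolding E_def rE_def using aA bW by blast
        next
          case E2
          then have "g = (a, {w, m a w})" using ma unfolding e2m_def by simp
          then show ?thesis unfolding E_def rE_def using aA bW by blast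
        qed
      qed
    qed
  qed
  obtain V2 E2 ends2 col2 where mg: "melonic_gen A V2 E2 ends2 col2"
    and iso: "colored_iso W' E' snd fst V2 E2 ends2 col2"
    using mel unfolding melonic_def W'_def E'_def by blast
  obtain \<phi> \<psi> where bphi: "bij_betw \<phi> W' V2" and bpsi: "bij_betw \<psi> E' E2"
      and comp: "\<forall>e\<in>E'. ends2 (\<psi> e) = \<phi> ` snd e \<and> col2 (\<psi> e) = fst e"
    using iso unfolding colored_iso_def by blast
  have finV2: "finite V2" and finE2: "finite E2" using melonic_gen_finite[OF mg] by auto
  define N where "N = Suc (Max (insert 0 E2))"
  have ltN: "g < N" if "g \<in> E2" for g
  proof -
    have "g \<le> Max (insert 0 E2)" using finE2 that by (intro Max_ge) auto
    then show ?thesis unfolding N_def by simp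
  qed
  define X2 where "X2 = Suc (Max (insert 0 V2))"
  define Y2 where "Y2 = Suc X2"
  have mxV: "x \<le> Max (insert 0 V2)" if "x \<in> V2" for x
    using finV2 that by (intro Max_ge) auto
  have X2n: "X2 \<notin> V2" unfolding X2_def using mxV by fastforce
  have Y2n: "Y2 \<notin> V2" unfolding Y2_def X2_def using mxV by fastforce
  have XY: "X2 \<noteq> Y2" unfolding Y2_def by simp
  define es where "es = \<psi> ea"
  have esE2: "es \<in> E2" unfolding es_def using bpsi eaE' bij_betwE by blast
  have uW': "u \<in> W'" and vW': "v \<in> W'" using uv unfolding W'_def by auto
  have ends_es: "ends2 es = {\<phi> u, \<phi> v}" "col2 es = a"
    using comp eaE' unfolding es_def ea_def by auto
  define ends3 where "ends3 g = (if g < N then ends2 g else if g = N then {Y2, \<phi> v}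
      else if g = N + a then {\<phi> u, X2} else {X2, Y2})" for g
  define col3 where "col3 g = (if g < N then col2 g else if g = N then a else g - N)" for g
  define F where "F = (\<lambda>k. N + k) ` (A - {a})"
  have a0: "a \<noteq> 0" using aA A0 by (metis)
  have mg3: "melonic_gen A (V2 \<union> {X2, Y2}) ((E2 - {es}) \<union> F \<union> {N + a, N}) ends3 col3"
  proof (rule melonic_gen.insert[OF mg esE2 ends_es(2) ends_es(1) X2n Y2n XY])
    show "finite F" unfolding F_def using finA by simp
    show "F \<inter> E2 = {}" unfolding F_def using ltN by fastforce
    show "N + a \<notin> E2 \<union> F" unfolding F_def using ltN by fastforce
    show "N \<notin> E2 \<union> F" unfolding F_def using ltN A0 by fastforce
    show "N + a \<noteq> N" using a0 by simp
    have c3: "col3 (N + k) = k" if kA: "k \<in> A" for k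
    proof -
      have "k \<noteq> 0" using kA A0 by metis
      then show ?thesis unfolding col3_def by simp
    qed
    have "col3 ` F = A - {a}" unfolding F_def image_image using c3 by (auto intro!: image_eqI)
    moreover have "inj_on col3 F" unfolding F_def inj_on_def using c3 by auto
    ultimately show "bij_betw col3 F (A - {a})" unfolding bij_betw_def by blast
    show "\<forall>f\<in>F. ends3 f = {X2, Y2}" unfolding F_def ends3_def using A0 by auto
    show "ends3 (N + a) = {\<phi> u, X2}" unfolding ends3_def using a0 by simp
    show "ends3 N = {Y2, \<phi> v}" unfolding ends3_def by simp
    show "col3 (N + a) = a" unfolding col3_def using a0 by simp
    show "col3 N = a" unfolding col3_def by simp
    show "\<forall>g\<in>E2 - {es}. ends3 g = ends2 g \<and> col3 g = col2 g" unfolding ends3_def col3_def using ltN by auto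
  qed
  define \<phi>3 where "\<phi>3 z = (if z = b then X2 else if z = w then Y2 else \<phi> z)" for z
  define \<psi>3 where "\<psi>3 g = (if g = e1m then N + a else if g = e2m then N else if g \<in> Fm then N + fst g else \<psi> g)" for g
  have bphi3: "bij_betw \<phi>3 W (V2 \<union> {X2, Y2})"
  proof -
    have "bij_betw \<phi>3 W' V2" using bphi by (rule bij_betw_cong[THEN iffD1, rotated]) (auto simp: \<phi>3_def W'_def)
    moreover have "bij_betw \<phi>3 {b} {X2}" unfolding \<phi>3_def by auto
    moreover have "bij_betw \<phi>3 {w} {Y2}" unfolding \<phi>3_def using bW by auto
    ultimately have "bij_betw \<phi>3 (W' \<union> {b} \<union> {w}) (V2 \<union> {X2} \<union> {Y2})"
      using X2n Y2n XY by (intro bij_betw_combine) auto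
    moreover have "W' \<union> {b} \<union> {w} = W" unfolding W'_def using bW by auto
    ultimately show ?thesis by (simp add: insert_commute)
  qed
  have sndE'b: "b \<notin> snd g" "w \<notin> snd g" if "g \<in> E'" for g
    using E'snd[OF that] unfolding W'_def by auto
  have e1Fm: "e1m \<notin> Fm" unfolding Fm_def e1m_def using uv by (auto simp: doubleton_eq_iff)
  have e2Fm: "e2m \<notin> Fm" unfolding Fm_def e2m_def using uv by (auto simp: doubleton_eq_iff)
  have e12: "e1m \<noteq> e2m" unfolding e1m_def e2m_def using uv bW by (auto simp: doubleton_eq_iff)
  have FmE': "g \<notin> Fm" "g \<noteq> e1m" "g \<noteq> e2m" if "g \<in> E'" for g
    using sndE'b[OF that] unfolding Fm_def e1m_def e2m_def by auto
  have bpsi3: "bij_betw \<psi>3 E ((E2 - {es}) \<union> F \<union> {N + a, N})"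
  proof -
    have "bij_betw \<psi> (E' - {ea}) (E2 - {es})"
      using bij_betw_DiffI[OF bpsi, of "{ea}" "{es}"] eaE' esE2 unfolding es_def by auto
    then have p1: "bij_betw \<psi>3 (E' - {ea}) (E2 - {es})"
      by (rule bij_betw_cong[THEN iffD1, rotated]) (auto simp: \<psi>3_def FmE')
    have ps: "\<psi>3 (k, {b,w}) = N + k" if "k \<in> A - {a}" for k
    proof -
      have "(k, {b,w}) \<in> Fm" unfolding Fm_def using that by blast
      then show ?thesis unfolding \<psi>3_def using e1Fm e2Fm by auto
    qed
    have "\<psi>3 ` Fm = F" unfolding Fm_def F_def image_image using ps by (auto intro!: image_eqI)
    moreover have "inj_on \<psi>3 Fm" unfolding Fm_def inj_on_def using ps by auto
    ultimately have p2: "bij_betw \<psi>3 Fm F" unfolding bij_betw_def by blast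
    have p3: "bij_betw \<psi>3 {e1m} {N + a}" unfolding \<psi>3_def by auto
    have p4: "bij_betw \<psi>3 {e2m} {N}" unfolding \<psi>3_def using e12 by auto
    have "bij_betw \<psi>3 ((E' - {ea}) \<union> Fm \<union> {e1m} \<union> {e2m}) ((E2 - {es}) \<union> F \<union> {N + a} \<union> {N})"
      apply (intro bij_betw_combine[OF bij_betw_combine[OF bij_betw_combine[OF p1 p2] p3] p4])
      unfolding F_def using ltN a0 A0 by fastforce+
    then show ?thesis using Edecomp by (simp add: insert_commute)
  qed
  have comp3: "\<forall>g\<in>E. ends3 (\<psi>3 g) = \<phi>3 ` snd g \<and> col3 (\<psi>3 g) = fst g"
  proof
    fix g assume "g \<in> E"
    then have "g \<in> (E' - {ea}) \<union> Fm \<union> {e1m} \<union> {e2m}" using Edecomp by simp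
    then consider "g \<in> E' - {ea}" | "g \<in> Fm" | "g = e1m" | "g = e2m" by blast
    then show "ends3 (\<psi>3 g) = \<phi>3 ` snd g \<and> col3 (\<psi>3 g) = fst g"
    proof cases
      case 1
      then have gE': "g \<in> E'" by simp
      then have p: "\<psi>3 g = \<psi> g" unfolding \<psi>3_def using FmE' by simp
      have "\<psi> g \<in> E2" using gE' bpsi bij_betwE by blast
      then have "\<psi> g < N" using ltN by simp
      moreover have "\<phi>3 ` snd g = \<phi> ` snd g" unfolding \<phi>3_def using sndE'b[OF gE'] by (auto intro!: image_cong)
      ultimately show ?thesis using p comp gE' unfolding ends3_def col3_def by simp
    next
      case 2
      then obtain k where k: "k \<in> A - {a}" "g = (k, {b,w})" unfolding Fm_def by blast
      have "\<psi>3 g = N + k" unfolding \<psi>3_def using 2 k e1Fm e2Fm by auto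
      moreover have "k \<noteq> 0" using k A0 by (metis DiffD1)
      moreover have "k \<noteq> a" using k by auto
      ultimately show ?thesis unfolding ends3_def col3_def \<phi>3_def using k bW by auto
    next
      case 3
      then have "\<psi>3 g = N + a" unfolding \<psi>3_def by simp
      then show ?thesis unfolding ends3_def col3_def \<phi>3_def using 3 a0 uv unfolding e1m_def by auto
    next
      case 4
      then have "\<psi>3 g = N" unfolding \<psi>3_def using e12 by simp
      then show ?thesis unfolding ends3_def col3_def \<phi>3_def using 4 uv bW unfolding e2m_def by auto
    qed
  qed
  have "colored_iso W E snd fst (V2 \<union> {X2, Y2}) ((E2 - {es}) \<union> F \<union> {N + a, N}) ends3 col3"
    unfolding colored_iso_def using bphi3 bpsi3 comp3 by blast
  then show ?thesis unfolding melonic_def E_def using mg3 by blast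
qed

definition mswap :: "(nat \<Rightarrow> 'v \<Rightarrow> 'v) \<Rightarrow> nat \<Rightarrow> 'v \<Rightarrow> 'v \<Rightarrow> nat \<Rightarrow> 'v \<Rightarrow> 'v" where
  "mswap m a u v = (\<lambda>k. if k = a then (\<lambda>z. if z = u then v else if z = v then u else m a z) else m k)"

lemma case2_facts:
  assumes ms: "msys A V m blk" and bV: "b \<in> V" "blk b" and aA: "a \<in> A"
    and nf: "m a b \<noteq> m 0 b" and fx: "\<forall>k\<in>A-{a}. m k b = m 0 b"
  defines "w \<equiv> m 0 b" and "u \<equiv> m a b" and "v \<equiv> m a (m 0 b)"
  shows "w \<in> V" "u \<in> V" "v \<in> V" "w \<noteq> b" "u \<noteq> b" "u \<noteq> w" "v \<noteq> w" "v \<noteq> b" "u \<noteq> v"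
    "m a u = b" "m a v = w" "m 0 w = b" "\<not> blk w" "\<not> blk u" "blk v"
    "\<forall>k\<in>A-{a}. m k b = w \<and> m k w = b"
proof -
  have A0: "0 \<notin> A" using msysD2[OF ms] by simp
  have aA': "a \<in> insert 0 A" "0 \<in> insert 0 A" using aA by auto
  note D = msysD[OF ms]
  show wV: "w \<in> V" using D(1)[OF aA'(2) bV(1)] unfolding w_def .
  show uV: "u \<in> V" using D(1)[OF aA'(1) bV(1)] unfolding u_def .
  show "v \<in> V" using D(1)[OF aA'(1) wV] unfolding v_def w_def .
  show "w \<noteq> b" using D(2)[OF aA'(2) bV(1)] unfolding w_def .
  show "u \<noteq> b" using D(2)[OF aA'(1) bV(1)] unfolding u_def .
  show "u \<noteq> w" using nf unfolding u_def w_def .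
  show "v \<noteq> w" using D(2)[OF aA'(1) wV] unfolding v_def w_def .
  show "v \<noteq> b"
  proof
    assume "v = b" then have "m a (m a w) = m a b" unfolding v_def w_def by simp
    then show False using D(3)[OF aA'(1) wV] nf unfolding w_def by simp
  qed
  show "u \<noteq> v"
  proof
    assume "u = v" then have "m a (m a b) = m a (m a w)" unfolding u_def v_def w_def by simp
    then show False using D(3)[OF aA'(1) wV] D(3)[OF aA'(1) bV(1)] D(2)[OF aA'(2) bV(1)] unfolding w_def by simp
  qed
  show "m a u = b" using D(3)[OF aA'(1) bV(1)] unfolding u_def .
  show "m a v = w" using D(3)[OF aA'(1) wV] unfolding v_def w_def .
  show "m 0 w = b" using D(3)[OF aA'(2) bV(1)] unfolding w_def .
  show "\<not> blk w" using D(4)[OF aA'(2) bV(1)] bV unfolding w_def by simp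
  show "\<not> blk u" using D(4)[OF aA'(1) bV(1)] bV unfolding u_def by simp
  show "blk v" using D(4)[OF aA'(1) wV] D(4)[OF aA'(2) bV(1)] bV unfolding v_def w_def by simp
  show "\<forall>k\<in>A-{a}. m k b = w \<and> m k w = b"
  proof
    fix k assume k: "k \<in> A - {a}"
    then have "m k b = w" using fx unfolding w_def by simp
    moreover have "m k w = b" using D(3)[of k b] k bV \<open>m k b = w\<close> by auto
    ultimately show "m k b = w \<and> m k w = b" by simp
  qed
qed

lemma case2_msys:
  assumes ms: "msys A V m blk" and bV: "b \<in> V" "blk b" and aA: "a \<in> A"
    and nf: "m a b \<noteq> m 0 b" and fx: "\<forall>k\<in>A-{a}. m k b = m 0 b"
  shows "msys A (V - {b, m 0 b}) (mswap m a (m a b) (m a (m 0 b))) blk"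
proof -
  define w where "w = m 0 b"
  define u where "u = m a b"
  define v where "v = m a (m 0 b)"
  note F = case2_facts[OF assms, folded w_def u_def v_def]
  note D = msysD[OF ms]
  have A0: "0 \<notin> A" using msysD2[OF ms] by simp
  have a0: "a \<noteq> 0" using aA A0 by metis
  define m' where "m' = mswap m a u v"
  have main: "m' k x \<in> V - {b, w} \<and> m' k x \<noteq> x \<and> m' k (m' k x) = x \<and> (blk (m' k x) \<longleftrightarrow> \<not> blk x)"
    if k: "k \<in> insert 0 A" and x: "x \<in> V - {b, w}" for k x
  proof (cases "k = a")
    case False
    then have m'k: "m' k = m k" unfolding m'_def mswap_def by simp
    have kb: "m k b = w \<and> m k w = b"
    proof (cases "k = 0")
      case True then show ?thesis using F unfolding w_def by simp
    next
      case False then show ?thesis using F k \<open>k \<noteq> a\<close> by auto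
    qed
    have xV: "x \<in> V" using x by simp
    have "m k x \<noteq> b"
    proof
      assume "m k x = b" then have "m k (m k x) = w" using kb by simp
      then show False using D(3)[OF k xV] x by simp
    qed
    moreover have "m k x \<noteq> w"
    proof
      assume "m k x = w" then have "m k (m k x) = b" using kb by simp
      then show False using D(3)[OF k xV] x by simp
    qed
    ultimately show ?thesis using m'k D[OF k xV] by simp
  next
    case True
    have m'a: "m' a = (\<lambda>z. if z = u then v else if z = v then u else m a z)"
      unfolding m'_def mswap_def by simp
    have ka: "a \<in> insert 0 A" using aA by simp
    have xV: "x \<in> V" using x by simp
    show ?thesis
    proof (cases "x = u \<or> x = v")
      case True
      then show ?thesis using m'a \<open>k = a\<close> F by auto
    next
      case False
      have "m a x \<noteq> b"
      proof
        assume "m a x = b" then have "m a (m a x) = u" unfolding u_def by simp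
        then show False using D(3)[OF ka xV] False by simp
      qed
      moreover have "m a x \<noteq> w"
      proof
        assume "m a x = w" then have "m a (m a x) = v" unfolding v_def w_def by simp
        then show False using D(3)[OF ka xV] False by simp
      qed
      moreover have "m a x \<noteq> u"
      proof
        assume "m a x = u" then have "m a (m a x) = b" using F(10) by simp
        then show False using D(3)[OF ka xV] x by simp
      qed
      moreover have "m a x \<noteq> v"
      proof
        assume "m a x = v" then have "m a (m a x) = w" using F(11) by simp
        then show False using D(3)[OF ka xV] x by simp
      qed
      ultimately show ?thesis using m'a \<open>k = a\<close> D[OF ka xV] False by simp
    qed
  qed
  have "msys A (V - {b, w}) m' blk"
    unfolding msys_def using msysD2[OF ms] main by auto
  then show ?thesis unfolding m'_def w_def u_def v_def by simp
qed

lemma case2_orb: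
  assumes ms: "msys A V m blk" and bV: "b \<in> V" "blk b" and aA: "a \<in> A"
    and nf: "m a b \<noteq> m 0 b" and fx: "\<forall>k\<in>A-{a}. m k b = m 0 b"
    and iA: "i \<in> A" and z: "z \<in> V - {b, m 0 b}" "blk z"
  shows "orb (mswap m a (m a b) (m a (m 0 b))) i z = orb m i z - {b}"
proof -
  define w where "w = m 0 b"
  define u where "u = m a b"
  define v where "v = m a (m 0 b)"
  note F = case2_facts[OF ms bV aA nf fx, folded w_def u_def v_def]
  note D = msysD[OF ms]
  define m' where "m' = mswap m a u v"
  have ms': "msys A (V - {b, w}) m' blk" using case2_msys[OF ms bV aA nf fx] unfolding m'_def u_def v_def w_def .
  have A0: "0 \<notin> A" using msysD2[OF ms] by simp
  have a0: "a \<noteq> 0" using aA A0 by metis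
  have m'0: "m' 0 = m 0" unfolding m'_def mswap_def using a0 by simp
  show ?thesis
  proof (cases "i = a")
    case False
    then have "m' i = m i" unfolding m'_def mswap_def by simp
    then have sg: "sig m' i = sig m i" unfolding sig_def[abs_def] using m'0 by simp
    have "orb m' i z \<subseteq> V - {b, w}" using orb_sub[OF ms' iA] z unfolding w_def by simp
    then have "b \<notin> orb m' i z" by auto
    then show ?thesis unfolding orb_def m'_def[symmetric] u_def[symmetric] v_def[symmetric]
      using sg unfolding orb_def by simp
  next
    case True
    define B where "B = {x \<in> V - {b, w}. blk x}"
    have ka: "a \<in> insert 0 A" "0 \<in> insert 0 A" using aA by auto
    have vB: "v \<in> B" unfolding B_def using F by simp
    have fv: "sig m a v = b" unfolding sig_def using F by simp
    have m0u: "m 0 u \<in> V" "m 0 u \<noteq> b" "m 0 u \<noteq> w" "blk (m 0 u)"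
    proof -
      show "m 0 u \<in> V" using D(1)[OF ka(2) F(2)] .
      show "m 0 u \<noteq> b"
      proof
        assume "m 0 u = b" then have "m 0 (m 0 u) = w" unfolding w_def by simp
        then show False using D(3)[OF ka(2) F(2)] F by simp
      qed
      show "m 0 u \<noteq> w"
      proof
        assume "m 0 u = w" then have "m 0 (m 0 u) = b" using F by simp
        then show False using D(3)[OF ka(2) F(2)] F by simp
      qed
      show "blk (m 0 u)" using D(4)[OF ka(2) F(2)] F by simp
    qed
    have fb: "sig m a b \<in> B" unfolding B_def sig_def using m0u unfolding u_def by simp
    have gv: "sig m' a v = sig m a b" unfolding sig_def m'0 unfolding m'_def mswap_def using F
      unfolding u_def by simp
    have gz: "\<forall>x\<in>B. x \<noteq> v \<longrightarrow> sig m' a x = sig m a x"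
    proof (intro ballI impI)
      fix x assume x: "x \<in> B" "x \<noteq> v"
      then have "x \<noteq> u" unfolding B_def using F by auto
      then show "sig m' a x = sig m a x" unfolding sig_def m'0 unfolding m'_def mswap_def using x by simp
    qed
    have fcl: "\<forall>x\<in>B. sig m a x \<in> B \<or> sig m a x = b"
    proof
      fix x assume x: "x \<in> B"
      then have xV: "x \<in> V" "blk x" unfolding B_def by auto
      have "sig m a x \<in> V" "blk (sig m a x)" using sig_in[OF ms aA xV(1)] xV by auto
      moreover have "sig m a x \<noteq> w" using calculation F by auto
      ultimately show "sig m a x \<in> B \<or> sig m a x = b" unfolding B_def by auto
    qed
    have finj: "\<forall>x\<in>B. sig m a x = b \<longrightarrow> x = v"
    proof (intro ballI impI)
      fix x assume x: "x \<in> B" "sig m a x = b"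
      then have xV: "x \<in> V" unfolding B_def by auto
      have "m 0 (m 0 (m a x)) = w" using x unfolding sig_def w_def by simp
      then have "m a x = w" using D(3)[OF ka(2) D(1)[OF ka(1) xV]] by simp
      then have "m a (m a x) = v" unfolding v_def w_def by simp
      then show "x = v" using D(3)[OF ka(1) xV] by simp
    qed
    have zB: "z \<in> B" unfolding B_def using z unfolding w_def by simp
    have "forb (sig m' a) z = forb (sig m a) z - {b}"
      by (rule bypass[OF _ vB fv fb gv gz fcl finj zB]) (simp add: B_def)
    then show ?thesis using True unfolding orb_def m'_def u_def v_def by simp
  qed
qed

lemma case2_nocycle:
  assumes ms: "msys A V m blk" and bV: "b \<in> V" "blk b" and aA: "a \<in> A"
    and nf: "m a b \<noteq> m 0 b" and fx: "\<forall>k\<in>A-{a}. m k b = m 0 b"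
    and nc: "\<not> has_cycle (SV A V m blk) (SE A V blk) (Sends m)"
  shows "\<not> has_cycle (SV A (V - {b, m 0 b}) (mswap m a (m a b) (m a (m 0 b))) blk)
            (SE A (V - {b, m 0 b}) blk) (Sends (mswap m a (m a b) (m a (m 0 b))))"
proof
  define V' where "V' = V - {b, m 0 b}"
  define m' where "m' = mswap m a (m a b) (m a (m 0 b))"
  have key: "orb m' i z = orb m i z - {b}" if "i \<in> A" "z \<in> V'" "blk z" for i z
    using case2_orb[OF ms bV aA nf fx that[unfolded V'_def]] unfolding m'_def .
  have bz: "z \<noteq> b" if "z \<in> V'" for z using that unfolding V'_def by auto
  have un: "\<Union> (orb m i ` (orb m' i z)) = orb m i z" if "i \<in> A" "z \<in> V'" "blk z" for i z
  proof
    show "\<Union> (orb m i ` orb m' i z) \<subseteq> orb m i z"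
      using key[OF that] forb_trans unfolding orb_def by fastforce
    have "z \<in> orb m' i z" unfolding orb_def by (rule forb_self)
    then show "orb m i z \<subseteq> \<Union> (orb m i ` orb m' i z)" by blast
  qed
  define h where "h x = (case x of Inl z \<Rightarrow> Inl z | Inr (i, C) \<Rightarrow> Inr (i, \<Union> (orb m i ` C)))" for x :: "'a + nat \<times> 'a set"
  have hInr: "h (Inr (i, orb m' i z)) = Inr (i, orb m i z)" if "i \<in> A" "z \<in> V'" "blk z" for i z
    unfolding h_def using un[OF that] by simp
  assume "has_cycle (SV A V' m' blk) (SE A V' blk) (Sends m')"
  then have "has_cycle (SV A V m blk) (SE A V blk) (Sends m)"
  proof (rule has_cycle_transfer[where h = h and g = id])
    show "inj_on h (SV A V' m' blk)"
    proof
      fix x y assume x: "x \<in> SV A V' m' blk" and y: "y \<in> SV A V' m' blk" and e: "h x = h y"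
      show "x = y"
      proof (cases x)
        case (Inl z1)
        then show ?thesis using e y unfolding h_def SV_def by auto
      next
        case (Inr p1)
        then obtain i1 z1 where 1: "x = Inr (i1, orb m' i1 z1)" "i1 \<in> A" "z1 \<in> V'" "blk z1"
          using x unfolding SV_def by blast
        then obtain i2 z2 where 2: "y = Inr (i2, orb m' i2 z2)" "i2 \<in> A" "z2 \<in> V'" "blk z2"
          using e y unfolding SV_def h_def by auto
        have "Inr (i1, orb m i1 z1) = h x" using hInr[OF 1(2-4)] 1(1) by simp
        also have "\<dots> = h y" by (rule e)
        also have "\<dots> = Inr (i2, orb m i2 z2)" using hInr[OF 2(2-4)] 2(1) by simp
        finally have iioo: "i1 = i2 \<and> orb m i1 z1 = orb m i2 z2" by (metis sum.inject(2) prod.inject)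
        then have ii: "i1 = i2" and oo: "orb m i1 z1 = orb m i2 z2" by (rule conjunct1, rule conjunct2)
        have "orb m' i1 z1 = orb m' i2 z2" using key[OF 1(2-4)] key[OF 2(2-4)] ii oo by simp
        then show ?thesis using 1(1) 2(1) ii by simp
      qed
    qed
    show "inj_on id (SE A V' blk)" by simp
    show "h ` SV A V' m' blk \<subseteq> SV A V m blk"
    proof
      fix y assume "y \<in> h ` SV A V' m' blk"
      then obtain x where x: "x \<in> SV A V' m' blk" "y = h x" by blast
      then consider z where "x = Inl z" "z \<in> V'" "blk z"
        | i z where "x = Inr (i, orb m' i z)" "i \<in> A" "z \<in> V'" "blk z" unfolding SV_def by blast
      then show "y \<in> SV A V m blk"
      proof cases
        case 1 then show ?thesis using x unfolding h_def SV_def V'_def by auto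
      next
        case 2 then show ?thesis using x hInr[OF 2(2-4)] unfolding SV_def V'_def by auto
      qed
    qed
    show "id ` SE A V' blk \<subseteq> SE A V blk" unfolding SE_def V'_def by auto
    show "\<forall>e\<in>SE A V' blk. Sends m (id e) = h ` Sends m' e"
    proof
      fix e assume "e \<in> SE A V' blk"
      then obtain z i where e: "e = (z, i)" "z \<in> V'" "blk z" "i \<in> A" unfolding SE_def by blast
      show "Sends m (id e) = h ` Sends m' e"
        unfolding e Sends_def using hInr[OF e(4,2,3)] by (simp add: h_def)
    qed
  qed
  then show False using nc by simp
qed

lemma msys_inv:
  assumes "msys A V m blk"
  shows "\<forall>x\<in>V. \<forall>k\<in>A. m k x \<in> V \<and> m k (m k x) = x"
  using msysD[OF assms] by auto

lemma case2_res:
  assumes ms: "msys A V m blk" and bV: "b \<in> V" "blk b" and aA: "a \<in> A"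
    and nf: "m a b \<noteq> m 0 b" and fx: "\<forall>k\<in>A-{a}. m k b = m 0 b"
  shows "res A (V - {b, m 0 b}) (mswap m a (m a b) (m a (m 0 b))) (m a b) = res A V m b - {b, m 0 b}"
proof -
  define w where "w = m 0 b"
  define u where "u = m a b"
  define v where "v = m a (m 0 b)"
  note F = case2_facts[OF ms bV aA nf fx, folded w_def u_def v_def]
  define m' where "m' = mswap m a u v"
  define V' where "V' = V - {b, w}"
  have ms': "msys A V' m' blk" using case2_msys[OF ms bV aA nf fx] unfolding m'_def u_def v_def w_def V'_def .
  have inv: "\<forall>x\<in>V. \<forall>k\<in>A. m k x \<in> V \<and> m k (m k x) = x" by (rule msys_inv[OF ms])
  have inv': "\<forall>x\<in>V'. \<forall>k\<in>A. m' k x \<in> V' \<and> m' k (m' k x) = x" by (rule msys_inv[OF ms'])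
  define W where "W = res A V m b"
  have cl: "\<forall>x\<in>V. \<forall>k\<in>A. m k x \<in> V" using inv by blast
  have WV: "W \<subseteq> V" unfolding W_def by (rule res_sub[OF cl bV(1)])
  have uW: "u \<in> W" unfolding W_def u_def using res_closed[OF res_refl bV(1) aA] .
  have m'1: "m' k z = m k z" if "k \<noteq> a" for k z using that unfolding m'_def mswap_def by simp
  have m'2: "m' a z = (if z = u then v else if z = v then u else m a z)" for z
    unfolding m'_def mswap_def by simp
  obtain k0 where k0: "k0 \<in> A - {a}"
  proof -
    have "card A \<ge> 2" "finite A" using msysD2[OF ms] by auto
    moreover have "A - {a} = {} \<Longrightarrow> card A \<le> 1"
    proof -
      assume "A - {a} = {}"
      then have "A \<subseteq> {a}" by blast
      then have "card A \<le> card {a}" by (intro card_mono) auto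
      then show "card A \<le> 1" by simp
    qed
    ultimately have "A - {a} \<noteq> {}" by linarith
    then show ?thesis using that by blast
  qed
  have "m k0 b \<in> res A V m b" by (rule res_closed[OF res_refl bV(1)]) (use k0 in auto)
  then have wW: "w \<in> W" using k0 F unfolding W_def by auto
  have vW: "v \<in> W" unfolding v_def W_def
    by (rule res_closed[OF wW[unfolded W_def w_def]]) (use WV wW aA in \<open>auto simp: W_def w_def\<close>)
  have uV': "u \<in> V'" unfolding V'_def using F by simp
  have "res A V' m' u \<subseteq> W - {b, w}"
  proof
    fix y assume "y \<in> res A V' m' u"
    then have "(u, y) \<in> (resrel A V' m')\<^sup>*" unfolding res_def by simp
    then have "y \<in> W \<and> y \<in> V'"
    proof (induction rule: rtrancl_induct)
      case base then show ?case using uW uV' by simp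
    next
      case (step y z)
      then obtain k where k: "k \<in> A" "z = m' k y" "y \<in> V'" unfolding resrel_def by blast
      have zV': "z \<in> V'" using inv' k by simp
      have "z \<in> W"
      proof (cases "k = a \<and> (y = u \<or> y = v)")
        case True then show ?thesis using m'2 k uW vW by auto
      next
        case False
        then have "m' k y = m k y" using m'1 m'2 by (cases "k = a") auto
        then have "z = m k y" using k by simp
        then show ?thesis using res_closed[of y A V m b k] step k unfolding W_def V'_def by auto
      qed
      then show ?case using zV' by simp
    qed
    then show "y \<in> W - {b, w}" unfolding V'_def by simp
  qed
  moreover have "W - {b, w} \<subseteq> res A V' m' u"
  proof
    fix y assume y: "y \<in> W - {b, w}"
    have "(b, y) \<in> (resrel A V m)\<^sup>*" using y unfolding W_def res_def by simp
    then have "y \<in> {b, w} \<or> (u, y) \<in> (resrel A V' m')\<^sup>*"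
    proof (induction rule: rtrancl_induct)
      case base then show ?case by simp
    next
      case (step y z)
      then obtain k where k: "k \<in> A" "z = m k y" "y \<in> V" unfolding resrel_def by blast
      show ?case
      proof (cases "y = b")
        case True
        then show ?thesis using k F fx unfolding u_def w_def by (cases "k = a") auto
      next
        case nb: False
        show ?thesis
        proof (cases "y = w")
          case True
          show ?thesis
          proof (cases "k = a")
            case True
            then have "z = v" using k \<open>y = w\<close> unfolding v_def w_def by simp
            moreover have "(u, v) \<in> resrel A V' m'" unfolding resrel_def using uV' aA m'2
              by (rule_tac CollectI, rule_tac x=u in exI, rule_tac x=a in exI) auto
            ultimately show ?thesis by (simp add: r_into_rtrancl)
          next
            case False
            then show ?thesis using k F \<open>y = w\<close> by auto
          qed
        next
          case nw: False
          then have IH: "(u, y) \<in> (resrel A V' m')\<^sup>*" using step nb by simp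
          show ?thesis
          proof (cases "z \<in> {b, w}")
            case True then show ?thesis by simp
          next
            case False
            have "m' k y = m k y"
            proof (cases "k = a")
              case True
              have "y \<noteq> u" using False k True F by auto
              moreover have "y \<noteq> v" using False k True F by auto
              ultimately show ?thesis using m'2 True by simp
            next
              case False then show ?thesis using m'1 by simp
            qed
            then have "z = m' k y" using k by simp
            then have "(y, z) \<in> resrel A V' m'" unfolding resrel_def V'_def using k nb nw by blast
            then show ?thesis using IH by (meson rtrancl_into_rtrancl)
          qed
        qed
      qed
    qed
    then show "y \<in> res A V' m' u" using y unfolding res_def by auto
  qed
  ultimately show ?thesis unfolding W_def V'_def m'_def u_def v_def w_def by blast
qed

lemma exists_other:
  assumes "finite A" "card A \<ge> 2"
  shows "\<exists>k. k \<in> A - {a}"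
proof (rule ccontr)
  assume "\<not> ?thesis"
  then have "A \<subseteq> {a}" by blast
  then have "card A \<le> card {a}" by (intro card_mono) auto
  then show False using assms by simp
qed

lemma rE_cong:
  assumes "\<forall>z\<in>W. \<forall>k\<in>A. m' k z = m k z"
  shows "rE A m' W = rE A m W"
  unfolding rE_def using assms by force

lemma core:
  assumes "msys A V m blk" "\<not> has_cycle (SV A V m blk) (SE A V blk) (Sends m)" "v \<in> V"
  shows "melonic A (res A V m v) (rE A m (res A V m v)) snd fst"
  using assms
proof (induction "card V" arbitrary: V m v rule: less_induct)
  case less
  note ms = less.prems(1) and nc = less.prems(2) and vV = less.prems(3)
  have inv: "\<forall>x\<in>V. \<forall>k\<in>A. m k x \<in> V \<and> m k (m k x) = x" by (rule msys_inv[OF ms])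
  have cl: "\<forall>x\<in>V. \<forall>k\<in>A. m k x \<in> V" using inv by blast
  have finV: "finite V" and finA: "finite A" and A0: "0 \<notin> A" and cA: "card A \<ge> 2"
    using msysD2[OF ms] by auto
  note D = msysD[OF ms]
  obtain b where bV: "b \<in> V" "blk b"
    and bg: "\<forall>k1\<in>A. \<forall>k2\<in>A. m k1 b \<noteq> m 0 b \<longrightarrow> m k2 b \<noteq> m 0 b \<longrightarrow> k1 = k2"
    using good_vertex[OF ms _ nc] vV by blast
  define w where "w = m 0 b"
  have z0: "0 \<in> insert 0 A" by simp
  have wV: "w \<in> V" and wb: "w \<noteq> b" and m0w: "m 0 w = b"
    using D[OF z0 bV(1)] unfolding w_def by auto
  define V' where "V' = V - {b, w}"
  have "V' \<subset> V" unfolding V'_def using bV by auto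
  then have cardV': "card V' < card V" using finV by (rule psubset_card_mono[rotated])
  have vres: "v \<in> res A V m b \<Longrightarrow> res A V m v = res A V m b"
    using res_eq[OF inv bV(1)] by blast
  show ?case
  proof (cases "\<forall>k\<in>A. m k b = w")
    case True
    have mkw: "\<forall>k\<in>A. m k b = w \<and> m k w = b"
    proof
      fix k assume k: "k \<in> A"
      then have "m k b = w" using True by simp
      moreover have "m k w = b" using calculation inv bV k by metis
      ultimately show "m k b = w \<and> m k w = b" by simp
    qed
    have kbw: "m k b = w \<and> m k w = b" if "k \<in> insert 0 A" for k
      using that mkw m0w unfolding w_def by auto
    have ms': "msys A V' m blk"
    proof -
      have "m k x \<in> V' \<and> m k x \<noteq> x \<and> m k (m k x) = x \<and> (blk (m k x) \<longleftrightarrow> \<not> blk x)"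
        if k: "k \<in> insert 0 A" and x: "x \<in> V'" for k x
      proof -
        have xV: "x \<in> V" using x unfolding V'_def by simp
        have "m k x \<noteq> b"
        proof
          assume "m k x = b" then have "m k (m k x) = w" using kbw[OF k] by simp
          then show False using D(3)[OF k xV] x unfolding V'_def by simp
        qed
        moreover have "m k x \<noteq> w"
        proof
          assume "m k x = w" then have "m k (m k x) = b" using kbw[OF k] by simp
          then show False using D(3)[OF k xV] x unfolding V'_def by simp
        qed
        ultimately show ?thesis using D[OF k xV] unfolding V'_def by simp
      qed
      then show ?thesis unfolding msys_def using finV finA A0 cA unfolding V'_def by auto
    qed
    have nc': "\<not> has_cycle (SV A V' m blk) (SE A V' blk) (Sends m)"
    proof
      assume "has_cycle (SV A V' m blk) (SE A V' blk) (Sends m)"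
      then have "has_cycle (SV A V m blk) (SE A V blk) (Sends m)"
        by (rule has_cycle_mono) (auto simp: SV_def SE_def V'_def)
      then show False using nc by simp
    qed
    obtain k0 where k0: "k0 \<in> A" using exists_other[OF finA cA] by blast
    have resb: "res A V m b = {b, w}"
    proof
      show "res A V m b \<subseteq> {b, w}"
      proof
        fix y assume "y \<in> res A V m b"
        then have "(b, y) \<in> (resrel A V m)\<^sup>*" unfolding res_def by simp
        then show "y \<in> {b, w}"
          by (induction rule: rtrancl_induct) (use mkw in \<open>auto simp: resrel_def\<close>)
      qed
      have "m k0 b \<in> res A V m b" by (rule res_closed[OF res_refl bV(1) k0])
      then show "{b, w} \<subseteq> res A V m b" using mkw k0 res_refl by auto
    qed
    show ?thesis
    proof (cases "v \<in> {b, w}")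
      case True
      then have "res A V m v = {b, w}" using vres resb by auto
      then show ?thesis using melonic_base[OF finA cA wb[symmetric] mkw] by simp
    next
      case False
      define W0 where "W0 = res A V m v"
      have W0V: "W0 \<subseteq> V" unfolding W0_def by (rule res_sub[OF cl vV])
      have "b \<notin> W0"
      proof
        assume "b \<in> W0"
        then have "v \<in> res A V m b" using res_sym[OF inv vV] unfolding W0_def by blast
        then show False using resb False by simp
      qed
      moreover have "w \<notin> W0"
      proof
        assume "w \<in> W0"
        then have "m k0 w \<in> W0" using res_closed[of w A V m v k0] k0 W0V unfolding W0_def by auto
        then show False using mkw k0 \<open>b \<notin> W0\<close> by simp
      qed
      ultimately have W0V': "W0 \<subseteq> V'" using W0V unfolding V'_def by auto
      have "res A V' m v = W0" by (rule res_transfer[OF cl vV W0_def W0V']) simp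
      moreover have "v \<in> V'" using vV False unfolding V'_def by simp
      ultimately show ?thesis using less.hyps[OF cardV' ms' nc'] unfolding W0_def by metis
    qed
  next
    case False
    then obtain a where aA: "a \<in> A" and nf: "m a b \<noteq> m 0 b" unfolding w_def by blast
    have fx: "\<forall>k\<in>A-{a}. m k b = m 0 b" using bg aA nf by blast
    define u where "u = m a b"
    define vv where "vv = m a (m 0 b)"
    define m' where "m' = mswap m a u vv"
    note F = case2_facts[OF ms bV aA nf fx, folded w_def u_def vv_def]
    have ms': "msys A V' m' blk" using case2_msys[OF ms bV aA nf fx]
      unfolding m'_def V'_def u_def vv_def w_def .
    have nc': "\<not> has_cycle (SV A V' m' blk) (SE A V' blk) (Sends m')"
      using case2_nocycle[OF ms bV aA nf fx nc] unfolding m'_def V'_def u_def vv_def w_def .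
    have m'1: "m' k z = m k z" if "k \<noteq> a" for k z using that unfolding m'_def mswap_def by simp
    have m'2: "m' a = (\<lambda>z. if z = u then vv else if z = vv then u else m a z)"
      unfolding m'_def mswap_def by simp
    define W where "W = res A V m b"
    have WV: "W \<subseteq> V" unfolding W_def by (rule res_sub[OF cl bV(1)])
    obtain k0 where k0: "k0 \<in> A - {a}" using exists_other[OF finA cA] by blast
    have bW: "b \<in> W" unfolding W_def by (rule res_refl)
    have uW: "u \<in> W" unfolding W_def u_def by (rule res_closed[OF res_refl bV(1) aA])
    have "m k0 b \<in> res A V m b" by (rule res_closed[OF res_refl bV(1)]) (use k0 in auto)
    then have wW: "w \<in> W" using k0 F unfolding W_def by auto
    have vvW: "vv \<in> W" unfolding vv_def W_def
      by (rule res_closed[OF wW[unfolded W_def w_def]]) (use WV wW aA in \<open>auto simp: W_def w_def\<close>)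
    show ?thesis
    proof (cases "v \<in> W")
      case True
      then have rv: "res A V m v = W" using vres unfolding W_def by simp
      have clW: "\<forall>z\<in>W. \<forall>k\<in>A. m k z \<in> W \<and> m k (m k z) = z"
      proof (intro ballI)
        fix z k assume z: "z \<in> W" and k: "k \<in> A"
        have "m k z \<in> W" using res_closed[of z A V m b k] z k WV unfolding W_def by auto
        moreover have "m k (m k z) = z" using inv z k WV by auto
        ultimately show "m k z \<in> W \<and> m k (m k z) = z" by simp
      qed
      have uV': "u \<in> V'" unfolding V'_def using F by simp
      have "res A V' m' u = W - {b, w}"
        using case2_res[OF ms bV aA nf fx] unfolding m'_def V'_def u_def vv_def w_def W_def .
      then have mel: "melonic A (W - {b, w}) (rE A m' (W - {b, w})) snd fst"
        using less.hyps[OF cardV' ms' nc' uV'] by simp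
      have m'1': "\<forall>k z. k \<noteq> a \<longrightarrow> m' k z = m k z" using m'1 by blast
      have "melonic A W (rE A m W) snd fst"
      proof (rule melonic_insert[where A=A and a=a and b=b and w=w and W=W and m=m and u=u and v=vv and m'=m'])
        show "\<forall>k\<in>A - {a}. m k b = w \<and> m k w = b" using F(16) .
        show "m a b = u" unfolding u_def ..
        show "m a w = vv" unfolding vv_def w_def ..
        show "u \<notin> {b, w}" "vv \<notin> {b, w}" using F by auto
      qed (use finA aA A0 bW wW F(4) F(10) F(11) uW vvW F(9) clW m'1' m'2 mel in auto)
      then show ?thesis using rv by simp
    next
      case False
      define W0 where "W0 = res A V m v"
      have W0V: "W0 \<subseteq> V" unfolding W0_def by (rule res_sub[OF cl vV])
      have clW0: "m k z \<in> W0" if "z \<in> W0" "k \<in> A" for z k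
        using res_closed[of z A V m v k] that W0V unfolding W0_def by auto
      have nb: "b \<notin> W0"
      proof
        assume "b \<in> W0"
        then have "v \<in> res A V m b" using res_sym[OF inv vV] unfolding W0_def by blast
        then show False using False unfolding W_def by simp
      qed
      have nw: "w \<notin> W0"
      proof
        assume "w \<in> W0"
        then have "m k0 w \<in> W0" using clW0 k0 by auto
        then show False using F k0 nb by auto
      qed
      have nu: "u \<notin> W0"
      proof
        assume "u \<in> W0"
        then have "m a u \<in> W0" using clW0 aA by auto
        then show False using F nb by auto
      qed
      have nvv: "vv \<notin> W0"
      proof
        assume "vv \<in> W0"
        then have "m a vv \<in> W0" using clW0 aA by auto
        then show False using F nw by auto
      qed
      have W0V': "W0 \<subseteq> V'" using W0V nb nw unfolding V'_def by auto
      have agree: "\<forall>z\<in>W0. \<forall>k\<in>A. m' k z = m k z"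
      proof (intro ballI)
        fix z k assume "z \<in> W0" "k \<in> A"
        then have "z \<noteq> u" "z \<noteq> vv" using nu nvv by auto
        then show "m' k z = m k z" using m'1 m'2 by (cases "k = a") auto
      qed
      have "res A V' m' v = W0" by (rule res_transfer[OF cl vV W0_def W0V' agree])
      moreover have "rE A m' W0 = rE A m W0" by (rule rE_cong[OF agree])
      moreover have "v \<in> V'" using W0V' res_refl[of v A V m] unfolding W0_def by blast
      ultimately show ?thesis using less.hyps[OF cardV' ms' nc'] unfolding W0_def by metis
    qed
  qed
qed

definition oth :: "'e set \<Rightarrow> ('e \<Rightarrow> 'v set) \<Rightarrow> ('e \<Rightarrow> nat) \<Rightarrow> nat \<Rightarrow> 'v \<Rightarrow> 'v" where
  "oth E ends col k x = (THE y. y \<in> ends (edge_at E ends col x k) \<and> y \<noteq> x)"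

lemma cg_edge_at:
  assumes "colored_graph q V E ends col" "x \<in> V" "k \<le> q"
  shows "edge_at E ends col x k \<in> E \<and> col (edge_at E ends col x k) = k \<and> x \<in> ends (edge_at E ends col x k)"
proof -
  have "\<exists>!e. e \<in> E \<and> col e = k \<and> x \<in> ends e" using assms unfolding colored_graph_def by blast
  then show ?thesis unfolding edge_at_def by (rule theI')
qed

lemma cg_edge_unique:
  assumes "colored_graph q V E ends col" "x \<in> V" "k \<le> q" "e \<in> E" "col e = k" "x \<in> ends e"
  shows "e = edge_at E ends col x k"
proof -
  have "\<exists>!e. e \<in> E \<and> col e = k \<and> x \<in> ends e" using assms unfolding colored_graph_def by blast
  then show ?thesis using cg_edge_at[OF assms(1-3)] assms(4-6) by blast
qed

lemma cg_oth:
  assumes cg: "colored_graph q V E ends col" and x: "x \<in> V" and k: "k \<le> q"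
  shows "ends (edge_at E ends col x k) = {x, oth E ends col k x} \<and> oth E ends col k x \<noteq> x \<and> oth E ends col k x \<in> V"
proof -
  define e where "e = edge_at E ends col x k"
  have e: "e \<in> E" "x \<in> ends e" using cg_edge_at[OF assms] unfolding e_def by auto
  obtain y1 y2 where y: "y1 \<in> V" "y2 \<in> V" "y1 \<noteq> y2" "ends e = {y1, y2}"
    using cg e unfolding colored_graph_def by blast
  obtain y where yy: "ends e = {x, y}" "y \<noteq> x" "y \<in> V" using y e by auto
  have "\<exists>!z. z \<in> ends e \<and> z \<noteq> x" using yy by auto
  then have "oth E ends col k x = y" unfolding oth_def e_def[symmetric] using yy by auto
  then show ?thesis using yy unfolding e_def by simp
qed

lemma cg_oth_edge:
  assumes cg: "colored_graph q V E ends col" and x: "x \<in> V" and k: "k \<le> q"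
  shows "edge_at E ends col (oth E ends col k x) k = edge_at E ends col x k"
proof -
  have o: "ends (edge_at E ends col x k) = {x, oth E ends col k x}" "oth E ends col k x \<in> V"
    using cg_oth[OF assms] by auto
  have "edge_at E ends col x k = edge_at E ends col (oth E ends col k x) k"
    by (rule cg_edge_unique[OF cg o(2) k]) (use cg_edge_at[OF assms] o(1) in auto)
  then show ?thesis by simp
qed

lemma cg_oth_inv:
  assumes cg: "colored_graph q V E ends col" and x: "x \<in> V" and k: "k \<le> q"
  shows "oth E ends col k (oth E ends col k x) = x"
proof -
  let ?y = "oth E ends col k x"
  have y: "?y \<in> V" "?y \<noteq> x" "ends (edge_at E ends col x k) = {x, ?y}" using cg_oth[OF assms] by auto
  have "ends (edge_at E ends col ?y k) = {?y, oth E ends col k ?y}" "oth E ends col k ?y \<noteq> ?y"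
    using cg_oth[OF cg y(1) k] by auto
  then show ?thesis using cg_oth_edge[OF assms] y by (auto simp: doubleton_eq_iff)
qed

lemma cg_oth_blk:
  assumes cg: "colored_graph q V E ends col" and x: "x \<in> V" and k: "k \<le> q"
    and bip: "\<forall>e\<in>E. \<exists>b w. ends e = {b, w} \<and> blk b \<and> \<not> blk w"
  shows "blk (oth E ends col k x) \<longleftrightarrow> \<not> blk x"
proof -
  have e: "edge_at E ends col x k \<in> E" using cg_edge_at[OF assms(1-3)] by simp
  have o: "ends (edge_at E ends col x k) = {x, oth E ends col k x}" "oth E ends col k x \<noteq> x"
    using cg_oth[OF assms(1-3)] by auto
  obtain b w where "ends (edge_at E ends col x k) = {b, w}" "blk b" "\<not> blk w" using bip e by blast
  then show ?thesis using o by (auto simp: doubleton_eq_iff)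
qed

lemma card_A: assumes "c \<in> {1..q}" shows "card ({1..q} - {c}) = q - 1"
  using assms by (simp add: card_Diff_singleton)

theorem mainTheorem14:
  fixes q c :: nat and V :: "'v set" and E :: "'e set" and ends :: "'e \<Rightarrow> 'v set"
    and col :: "'e \<Rightarrow> nat" and r :: 'e and ro :: 'v and blk :: "'v \<Rightarrow> bool"
  assumes "q \<ge> 3"
    and "rooted_bipartite_colored_graph q V E ends col r ro blk"
    and "c \<in> {1..q}"
    and "all_components_trees (psiV_hat q c E ends col blk) (psiE_hat q c E col) (psi_ends E ends col blk)"
  shows "\<forall>v\<in>V. melonic ({1..q} - {c})
           (component V {e \<in> E. col e \<noteq> 0 \<and> col e \<noteq> c} ends v)
           (edges_within {e \<in> E. col e \<noteq> 0 \<and> col e \<noteq> c} ends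
              (component V {e \<in> E. col e \<noteq> 0 \<and> col e \<noteq> c} ends v))
           ends col"
proof
  fix v0 assume v0: "v0 \<in> V"
  have cg: "colored_graph q V E ends col" and bip: "\<forall>e\<in>E. \<exists>b w. ends e = {b, w} \<and> blk b \<and> \<not> blk w"
    using assms(2) unfolding rooted_bipartite_colored_graph_def by auto
  have finV: "finite V" using cg unfolding colored_graph_def by simp
  define A where "A = {1..q} - {c}"
  define m where "m = oth E ends col"
  define ea where "ea x k = edge_at E ends col x k" for x k
  have Aq: "k \<le> q" if "k \<in> insert 0 A" for k using that unfolding A_def by auto
  have ms: "msys A V m blk"
    unfolding msys_def
  proof (intro conjI ballI)
    show "finite V" by (rule finV)
    show "finite A" unfolding A_def by simp
    show "0 \<notin> A" unfolding A_def by simp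
    show "card A \<ge> 2" unfolding A_def using card_A[OF assms(3)] assms(1) by simp
  next
    fix k x assume k: "k \<in> insert 0 A" and x: "x \<in> V"
    show "m k x \<in> V" "m k x \<noteq> x" using cg_oth[OF cg x Aq[OF k]] unfolding m_def by auto
    show "m k (m k x) = x" using cg_oth_inv[OF cg x Aq[OF k]] unfolding m_def .
    show "blk (m k x) \<longleftrightarrow> \<not> blk x" using cg_oth_blk[OF cg x Aq[OF k] bip] unfolding m_def .
  qed
  have eaf: "ea x k \<in> E \<and> col (ea x k) = k \<and> ends (ea x k) = {x, m k x}" if "x \<in> V" "k \<le> q" for x k
    using cg_edge_at[OF cg that] cg_oth[OF cg that] unfolding ea_def m_def by auto
  have eaU: "e = ea x k" if "x \<in> V" "k \<le> q" "e \<in> E" "col e = k" "x \<in> ends e" for e x k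
    using cg_edge_unique[OF cg that] unfolding ea_def .
  have ea_oth: "ea (m k x) k = ea x k" if "x \<in> V" "k \<le> q" for x k
    using cg_oth_edge[OF cg that] unfolding ea_def m_def .
  have D: "m k x \<in> V" "m k x \<noteq> x" "m k (m k x) = x" "blk (m k x) \<longleftrightarrow> \<not> blk x"
    if "x \<in> V" "k \<in> insert 0 A" for x k using msysD[OF ms that(2,1)] by auto
  have nc: "\<not> has_cycle (SV A V m blk) (SE A V blk) (Sends m)"
  proof
    assume hc: "has_cycle (SV A V m blk) (SE A V blk) (Sends m)"
    define Bl where "Bl = {x \<in> V. blk x}"
    have z0: "0 \<in> insert 0 A" by simp
    have be: "black_end ends blk (ea b 0) = b" if "b \<in> V" "blk b" for b
    proof -
      have "ends (ea b 0) = {b, m 0 b}" "\<not> blk (m 0 b)" using eaf[OF that(1)] D[OF that(1) z0] that by auto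
      then show ?thesis unfolding black_end_def using that by (auto intro!: the_equality)
    qed
    have we: "white_end ends blk (ea b i) = m i b" if "b \<in> V" "blk b" "i \<in> A" for b i
    proof -
      have "i \<le> q" "i \<in> insert 0 A" using that Aq by auto
      then have "ends (ea b i) = {b, m i b}" "\<not> blk (m i b)" using eaf[OF that(1)] D[OF that(1)] that by auto
      then show ?thesis unfolding white_end_def using that by (auto intro!: the_equality)
    qed
    have succ: "psi_succ E ends col blk i (ea b 0) = ea (sig m i b) 0" if "b \<in> V" "blk b" "i \<in> A" for b i
    proof -
      have mi: "m i b \<in> V" using D[OF that(1)] that(3) by auto
      have "psi_succ E ends col blk i (ea b 0) = ea (m i b) 0"
        unfolding psi_succ_def be[OF that(1,2)] using we[OF that] unfolding ea_def by simp
      also have "\<dots> = ea (m 0 (m i b)) 0" using ea_oth[OF mi] by simp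
      finally show ?thesis unfolding sig_def .
    qed
    have sigBl: "sig m i x \<in> Bl" if "x \<in> Bl" "i \<in> A" for x i
      using sig_in[OF ms that(2)] that unfolding Bl_def by auto
    have pown: "(psi_succ E ends col blk i ^^ n) (ea b 0) = ea ((sig m i ^^ n) b) 0 \<and> (sig m i ^^ n) b \<in> Bl"
      if "b \<in> Bl" "i \<in> A" for b i n
    proof (induction n)
      case 0 then show ?case using that by simp
    next
      case (Suc n)
      then show ?case using succ[of "(sig m i ^^ n) b" i] that sigBl unfolding Bl_def by auto
    qed
    have cyc: "psi_cycle E ends col blk i (ea b 0) = (\<lambda>z. ea z 0) ` orb m i b" if "b \<in> Bl" "i \<in> A" for b i
      unfolding psi_cycle_def orb_def forb_def using pown[OF that] by auto
    have orbBl: "orb m i b \<subseteq> Bl" if "b \<in> Bl" "i \<in> A" for b i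
      unfolding orb_def using forb_closed[of Bl "sig m i" b] sigBl that by blast
    have injea: "inj_on (\<lambda>z. ea z 0) Bl"
    proof
      fix x y assume xy: "x \<in> Bl" "y \<in> Bl" "ea x 0 = ea y 0"
      have xV: "x \<in> V" "blk x" and yV: "y \<in> V" "blk y" using xy unfolding Bl_def by auto
      have e1: "ends (ea x 0) = {x, m 0 x}" using eaf[OF xV(1)] by simp
      have e2: "\<not> blk (m 0 x)" using D(4)[OF xV(1) z0] xV by simp
      have "y \<in> ends (ea y 0)" using eaf[OF yV(1)] by simp
      then have "y = x \<or> y = m 0 x" using e1 xy(3) by auto
      then show "x = y" using e2 yV by auto
    qed
    define h where "h x = (case x of Inl b \<Rightarrow> Inl (ea b 0) | Inr (i, C) \<Rightarrow> Inr (i, (\<lambda>z. ea z 0) ` C))"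
      for x :: "'v + nat \<times> 'v set"
    define g where "g p = (case p of (b, i) \<Rightarrow> (ea b 0, i))" for p :: "'v \<times> nat"
    have "has_cycle (psiV_hat q c E ends col blk) (psiE_hat q c E col) (psi_ends E ends col blk)"
    proof (rule has_cycle_transfer[OF hc, where h = h and g = g])
      show "inj_on h (SV A V m blk)"
      proof
        fix x y assume x: "x \<in> SV A V m blk" and y: "y \<in> SV A V m blk" and e: "h x = h y"
        show "x = y"
        proof (cases x)
          case (Inl b)
          then have b: "b \<in> Bl" using x unfolding SV_def Bl_def by auto
          show ?thesis
          proof (cases y)
            case (Inl b')
            then have b': "b' \<in> Bl" using y unfolding SV_def Bl_def by auto
            have "ea b 0 = ea b' 0" using e \<open>x = Inl b\<close> Inl unfolding h_def by simp
            then have "b = b'" using inj_onD[OF injea _ b b'] by simp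
            then show ?thesis using \<open>x = Inl b\<close> Inl by simp
          next
            case (Inr p)
            then show ?thesis using e \<open>x = Inl b\<close> unfolding h_def by (cases p) auto
          qed
        next
          case (Inr p)
          then obtain i b where ib: "x = Inr (i, orb m i b)" "i \<in> A" "b \<in> Bl"
            using x unfolding SV_def Bl_def by blast
          show ?thesis
          proof (cases y)
            case (Inl b')
            then show ?thesis using e ib unfolding h_def by simp
          next
            case (Inr p')
            then obtain i' b' where ib': "y = Inr (i', orb m i' b')" "i' \<in> A" "b' \<in> Bl"
              using y unfolding SV_def Bl_def by blast
            have hx: "h x = Inr (i, (\<lambda>z. ea z 0) ` orb m i b)" using ib unfolding h_def by simp
            have hy: "h y = Inr (i', (\<lambda>z. ea z 0) ` orb m i' b')" using ib' unfolding h_def by simp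
            have ii: "i = i'" and im: "(\<lambda>z. ea z 0) ` orb m i b = (\<lambda>z. ea z 0) ` orb m i' b'"
              using e hx hy by (metis sum.inject(2) prod.inject)+
            have "orb m i b = orb m i' b'"
              using inj_on_image_eq_iff[OF injea orbBl[OF ib(3,2)] orbBl[OF ib'(3,2)]] im by blast
            then show ?thesis using ib(1) ib'(1) ii by simp
          qed
        qed
      qed
      show "inj_on g (SE A V blk)"
      proof
        fix x y assume x: "x \<in> SE A V blk" and y: "y \<in> SE A V blk" and e: "g x = g y"
        obtain b i where bi: "x = (b, i)" "b \<in> Bl" using x unfolding SE_def Bl_def by blast
        obtain b' i' where bi': "y = (b', i')" "b' \<in> Bl" using y unfolding SE_def Bl_def by blast
        have "ea b 0 = ea b' 0" "i = i'" using e bi bi' unfolding g_def by auto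
        moreover then have "b = b'" using inj_onD[OF injea _ bi(2) bi'(2)] by simp
        ultimately show "x = y" using bi bi' by simp
      qed
      have c0: "c \<noteq> 0" using assms(3) by simp
      show "h ` SV A V m blk \<subseteq> psiV_hat q c E ends col blk"
      proof
        fix y assume "y \<in> h ` SV A V m blk"
        then obtain x where x: "x \<in> SV A V m blk" "y = h x" by blast
        then consider b where "x = Inl b" "b \<in> Bl" | i b where "x = Inr (i, orb m i b)" "i \<in> A" "b \<in> Bl"
          unfolding SV_def Bl_def by blast
        then show "y \<in> psiV_hat q c E ends col blk"
        proof cases
          case 1
          then have "y = Inl (ea b 0)" "ea b 0 \<in> E" "col (ea b 0) = 0"
            using x eaf unfolding h_def Bl_def by auto
          then show ?thesis unfolding psiV_hat_def psiV_def using assms(3) by auto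
        next
          case 2
          have b: "b \<in> V" "blk b" using 2 unfolding Bl_def by auto
          have "y = Inr (i, psi_cycle E ends col blk i (ea b 0))"
            using x 2 cyc[OF 2(3,2)] unfolding h_def by simp
          moreover have "ea b 0 \<in> E" "col (ea b 0) = 0" using eaf b by auto
          moreover have "i \<in> {1..q}" "i \<noteq> c" using 2 unfolding A_def by auto
          ultimately show ?thesis unfolding psiV_hat_def psiV_def by auto
        qed
      qed
      show "g ` SE A V blk \<subseteq> psiE_hat q c E col"
      proof
        fix y assume "y \<in> g ` SE A V blk"
        then obtain b i where bi: "y = (ea b 0, i)" "b \<in> V" "i \<in> A" unfolding SE_def g_def by auto
        then show "y \<in> psiE_hat q c E col" unfolding psiE_hat_def psiE_def using eaf[of b 0] unfolding A_def by auto
      qed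
      show "\<forall>e\<in>SE A V blk. psi_ends E ends col blk (g e) = h ` Sends m e"
      proof
        fix e assume "e \<in> SE A V blk"
        then obtain b i where bi: "e = (b, i)" "b \<in> Bl" "i \<in> A" unfolding SE_def Bl_def by blast
        show "psi_ends E ends col blk (g e) = h ` Sends m e"
          unfolding bi psi_ends_def g_def Sends_def h_def using cyc[OF bi(2,3)] unfolding ea_def by simp
      qed
    qed
    moreover have "\<forall>e\<in>psiE_hat q c E col. psi_ends E ends col blk e \<subseteq> psiV_hat q c E ends col blk"
      unfolding psiE_hat_def psiE_def psi_ends_def psiV_hat_def psiV_def using assms(3) by auto
    ultimately show False using cycle_in_component assms(4) by blast
  qed
  define EA where "EA = {e \<in> E. col e \<noteq> 0 \<and> col e \<noteq> c}"
  define W where "W = res A V m v0"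
  have cl: "\<forall>x\<in>V. \<forall>k\<in>A. m k x \<in> V" using msys_inv[OF ms] by blast
  have WV: "W \<subseteq> V" unfolding W_def by (rule res_sub[OF cl v0])
  have Wcl: "m k z \<in> W" if "z \<in> W" "k \<in> A" for z k
    using res_closed[of z A V m v0 k] that WV unfolding W_def by auto
  have kA: "k \<in> A \<longleftrightarrow> k \<noteq> 0 \<and> k \<noteq> c \<and> k \<le> q" for k unfolding A_def by auto
  have colq: "col e \<le> q" if "e \<in> E" for e using cg that unfolding colored_graph_def by blast
  have comp: "component V EA ends v0 = W"
  proof
    show "component V EA ends v0 \<subseteq> W"
    proof
      fix y assume "y \<in> component V EA ends v0"
      then have "(v0, y) \<in> (adj {e\<in>EA. ends e \<subseteq> V} ends)\<^sup>*" unfolding component_def by simp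
      then show "y \<in> W"
      proof (induction rule: rtrancl_induct)
        case base then show ?case unfolding W_def by (rule res_refl)
      next
        case (step x y)
        then obtain e where e: "e \<in> EA" "ends e \<subseteq> V" "x \<in> ends e" "y \<in> ends e" unfolding adj_def by blast
        have xV: "x \<in> V" using e by auto
        have k: "col e \<in> A" using e colq unfolding EA_def kA by auto
        have eE: "e \<in> E" using e unfolding EA_def by simp
        have eq: "e = ea x (col e)" using eaU[OF xV colq[OF eE] eE refl e(3)] .
        have "ends e = ends (ea x (col e))" using arg_cong[of e "ea x (col e)" ends, OF eq] .
        then have "ends e = {x, m (col e) x}" using eaf[OF xV colq[OF eE]] by simp
        then have "y = x \<or> y = m (col e) x" using e by auto
        then show ?case using Wcl[OF step(3) k] step(3) by auto
      qed
    qed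
    show "W \<subseteq> component V EA ends v0"
    proof
      fix y assume "y \<in> W"
      then have "(v0, y) \<in> (resrel A V m)\<^sup>*" unfolding W_def res_def by simp
      then have "(v0, y) \<in> (adj {e\<in>EA. ends e \<subseteq> V} ends)\<^sup>*"
      proof (induction rule: rtrancl_induct)
        case base then show ?case by simp
      next
        case (step x y)
        then obtain k where k: "x \<in> V" "k \<in> A" "y = m k x" unfolding resrel_def by blast
        have kq: "k \<le> q" "k \<in> insert 0 A" using k kA by auto
        have "ea x k \<in> EA" "ends (ea x k) = {x, m k x}" using eaf[OF k(1) kq(1)] k kA unfolding EA_def by auto
        moreover have "ends (ea x k) \<subseteq> V" using calculation D[OF k(1) kq(2)] k by auto
        ultimately have "(x, y) \<in> adj {e\<in>EA. ends e \<subseteq> V} ends" unfolding adj_def using k by blast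
        then show ?case using step by (meson rtrancl_into_rtrancl)
      qed
      then show "y \<in> component V EA ends v0" unfolding component_def using \<open>y \<in> W\<close> WV by auto
    qed
  qed
  have iso: "colored_iso W (edges_within EA ends W) ends col W (rE A m W) snd fst"
    unfolding colored_iso_def
  proof (intro exI conjI)
    show "bij_betw id W W" by simp
    define \<psi> where "\<psi> e = (col e, ends e)" for e
    have ew: "e = ea x (col e) \<and> col e \<in> A \<and> ends e = {x, m (col e) x}"
      if "e \<in> edges_within EA ends W" "x \<in> ends e" for e x
    proof -
      have e: "e \<in> E" "col e \<noteq> 0" "col e \<noteq> c" "ends e \<subseteq> W" using that unfolding edges_within_def EA_def by auto
      then have xV: "x \<in> V" using that WV by auto
      have k: "col e \<le> q" using colq e by simp
      have "e = ea x (col e)" using eaU[OF xV k e(1) refl that(2)] .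
      moreover have "col e \<in> A" using e k kA by auto
      ultimately show ?thesis using eaf[OF xV k] by auto
    qed
    have nonempty: "\<exists>x. x \<in> ends e" if "e \<in> E" for e using cg that unfolding colored_graph_def by blast
    show "bij_betw \<psi> (edges_within EA ends W) (rE A m W)"
      unfolding bij_betw_def
    proof
      show "inj_on \<psi> (edges_within EA ends W)"
      proof
        fix e1 e2 assume e1: "e1 \<in> edges_within EA ends W" and e2: "e2 \<in> edges_within EA ends W"
          and eq: "\<psi> e1 = \<psi> e2"
        obtain x where x: "x \<in> ends e1" using nonempty e1 unfolding edges_within_def EA_def by blast
        have "x \<in> ends e2" "col e1 = col e2" using eq x unfolding \<psi>_def by auto
        then show "e1 = e2" using ew[OF e1 x] ew[OF e2] by metis
      qed
      show "\<psi> ` edges_within EA ends W = rE A m W"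
      proof
        show "\<psi> ` edges_within EA ends W \<subseteq> rE A m W"
        proof
          fix y assume "y \<in> \<psi> ` edges_within EA ends W"
          then obtain e where e: "e \<in> edges_within EA ends W" "y = \<psi> e" by blast
          obtain x where x: "x \<in> ends e" using nonempty e unfolding edges_within_def EA_def by blast
          have "x \<in> W" using e x unfolding edges_within_def by auto
          then show "y \<in> rE A m W" unfolding rE_def \<psi>_def using ew[OF e(1) x] e(2) \<psi>_def by auto
        qed
        show "rE A m W \<subseteq> \<psi> ` edges_within EA ends W"
        proof
          fix y assume "y \<in> rE A m W"
          then obtain z k where zk: "y = (k, {z, m k z})" "z \<in> W" "k \<in> A" unfolding rE_def by blast
          have zV: "z \<in> V" using zk WV by auto
          have kq: "k \<le> q" using zk kA by auto
          have "ea z k \<in> edges_within EA ends W"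
            using eaf[OF zV kq] zk Wcl kA unfolding edges_within_def EA_def by auto
          moreover have "\<psi> (ea z k) = y" using eaf[OF zV kq] zk unfolding \<psi>_def by simp
          ultimately show "y \<in> \<psi> ` edges_within EA ends W" by blast
        qed
      qed
    qed
    show "\<forall>e\<in>edges_within EA ends W. snd (\<psi> e) = id ` ends e \<and> fst (\<psi> e) = col e"
      unfolding \<psi>_def by simp
  qed
  have "melonic A W (rE A m W) snd fst" unfolding W_def by (rule core[OF ms nc v0])
  then have "melonic A W (edges_within EA ends W) ends col" by (rule iso_melonic[OF iso])
  then show "melonic ({1..q} - {c}) (component V {e \<in> E. col e \<noteq> 0 \<and> col e \<noteq> c} ends v0)
           (edges_within {e \<in> E. col e \<noteq> 0 \<and> col e \<noteq> c} ends
              (component V {e \<in> E. col e \<noteq> 0 \<and> col e \<noteq> c} ends v0)) ends col"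
    using comp unfolding EA_def A_def by simp
qed


end
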